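(* Consider any sequence of positive numbers $\{\xi_n\}_{n=1}^{\infty}$ such that $\xi_n\to 0$ and $\sqrt{n}\xi_n\to\infty$ as $n\to\infty$. When the rate $R^\mathrm{i}$ approaches capacity $C_{\rm{bio}}$ from above, the probability of correct decoding scales as \begin{align} \lim_{n\to\infty} -\frac{\log \mathrm{P}_\mathrm{c}^*(n,C_{\rm{bio}}+\xi_n)}{n\xi_n^2}=\frac{1}{2\mathrm{V}}. \end{align} Similarly, when the rate $R^\mathrm{i}$ approaches capacity $C_{\rm{bio}}$ from below, the probability of correct decoding scales as \begin{align} \lim_{n\to\infty} -\frac{\log (1-\mathrm{P}_\mathrm{c}^*(n,C_{\rm{bio}}-\xi_n))}{n\xi_n^2}=\frac{1}{2\mathrm{V}}. \end{align}
   Context: Biometrical identification problem: $\mathcal{X},\mathcal{Y},\mathcal{Z}$ are finite alphabets; $M$ feature vectors $X^n(1),\ldots,X^n(M)$ are generated i.i.d. according to $P_X^n$; for each $m$, $Y^n(m)$ is the output of a DMC $P_{Y|X}$ with input $X^n(m)$ and is stored without compression. An index $W$ uniform on $\{1,\ldots,M\}$, independent of everything else, is drawn; the user observes $Z^n$, the output of a DMC $P_{Z|X}$ with input $X^n(W)$, and outputs $\hat{W}=g^{(n)}(Y^n(1),\ldots,Y^n(M),Z^n)$ for a deterministic decoding function $g^{(n)}$. The probability of correct decoding is $\mathrm{P}_\mathrm{c}^{(n)}(g^{(n)})=\Pr\{\hat{W}=W\}$. Let $\mathrm{P}_\mathrm{c}^*(n,R^\mathrm{i})$ be the maximum probability of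 correct decoding (over decoders) when the number of items $M$ satisfies $\log M\ge nR^\mathrm{i}$. Let $(Y,Z)\sim P_{YZ}$ induced by $P_X\times P_{Y|X}\times P_{Z|X}$; the capacity is $C_{\mathrm{bio}}=I(P_Y,P_{Z|Y})$, and $\mathrm{V}:=\mathrm{Var}\left[\log\frac{P_{Z|Y}(Z|Y)}{P_Z(Z)}\right]$ is assumed to satisfy $\mathrm{V}>0$. *)

theory Defs
  imports Complex_Main "HOL-Library.FuncSet"
begin

text \<open>Length-n sequences are
  extensional functions on {..<n}; a list of M sequences is an extensional
  function on {..<M} (items are indexed 0,...,M-1). Logarithms are natural.\<close>

definition pmf_on :: "('a::finite \<Rightarrow> real) \<Rightarrow> bool" where
  "pmf_on P \<longleftrightarrow> (\<forall>a. 0 \<le> P a) \<and> (\<Sum>a\<in>UNIV. P a) = 1"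

definition stoch_chan :: "('a::finite \<Rightarrow> 'b::finite \<Rightarrow> real) \<Rightarrow> bool" where
  "stoch_chan W \<longleftrightarrow> (\<forall>a. pmf_on (W a))"

definition seqs :: "nat \<Rightarrow> (nat \<Rightarrow> 'a) set" where
  "seqs n = {..<n} \<rightarrow>\<^sub>E UNIV"

definition tuples :: "nat \<Rightarrow> nat \<Rightarrow> (nat \<Rightarrow> nat \<Rightarrow> 'a) set" where
  "tuples M n = {..<M} \<rightarrow>\<^sub>E seqs n"

definition iid :: "nat \<Rightarrow> ('a \<Rightarrow> real) \<Rightarrow> (nat \<Rightarrow> 'a) \<Rightarrow> real" where
  "iid n P x = (\<Prod>i<n. P (x i))"

definition dmc :: "nat \<Rightarrow> ('a \<Rightarrow> 'b \<Rightarrow> real) \<Rightarrow> (nat \<Rightarrow> 'a) \<Rightarrow> (nat \<Rightarrow> 'b) \<Rightarrow> real" where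
  "dmc n W x y = (\<Prod>i<n. W (x i) (y i))"

text \<open>Probability of correct decoding of decoder g with M stored items.
  W uniform on {..<M}; X(m) iid P_X^n; Y(m) output of P_{Y|X}^n on X(m);
  Z output of P_{Z|X}^n on X(W); decision g(Y(0..M-1), Z).\<close>
definition prob_correct ::
  "('x::finite \<Rightarrow> real) \<Rightarrow> ('x \<Rightarrow> 'y::finite \<Rightarrow> real) \<Rightarrow> ('x \<Rightarrow> 'z::finite \<Rightarrow> real)
   \<Rightarrow> nat \<Rightarrow> nat \<Rightarrow> ((nat \<Rightarrow> nat \<Rightarrow> 'y) \<Rightarrow> (nat \<Rightarrow> 'z) \<Rightarrow> nat) \<Rightarrow> real" where
  "prob_correct PX WY WZ n M g =
     (\<Sum>w<M. (1 / real M) *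
        (\<Sum>xs\<in>tuples M n. \<Sum>ys\<in>tuples M n. \<Sum>z\<in>seqs n.
           (\<Prod>m<M. iid n PX (xs m) * dmc n WY (xs m) (ys m))
           * dmc n WZ (xs w) z * (if g ys z = w then 1 else 0)))"

definition pc_star ::
  "('x::finite \<Rightarrow> real) \<Rightarrow> ('x \<Rightarrow> 'y::finite \<Rightarrow> real) \<Rightarrow> ('x \<Rightarrow> 'z::finite \<Rightarrow> real)
   \<Rightarrow> nat \<Rightarrow> real \<Rightarrow> real" where
  "pc_star PX WY WZ n R =
     Sup {prob_correct PX WY WZ n M g | M g. 1 \<le> M \<and> ln (real M) \<ge> real n * R}"

definition PYZ :: "('x::finite \<Rightarrow> real) \<Rightarrow> ('x \<Rightarrow> 'y \<Rightarrow> real) \<Rightarrow> ('x \<Rightarrow> 'z \<Rightarrow> real) \<Rightarrow> 'y \<Rightarrow> 'z \<Rightarrow> real" where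
  "PYZ PX WY WZ y z = (\<Sum>x\<in>UNIV. PX x * WY x y * WZ x z)"

definition PY :: "('x::finite \<Rightarrow> real) \<Rightarrow> ('x \<Rightarrow> 'y \<Rightarrow> real) \<Rightarrow> ('x \<Rightarrow> 'z::finite \<Rightarrow> real) \<Rightarrow> 'y \<Rightarrow> real" where
  "PY PX WY WZ y = (\<Sum>z\<in>UNIV. PYZ PX WY WZ y z)"

definition PZ :: "('x::finite \<Rightarrow> real) \<Rightarrow> ('x \<Rightarrow> 'y::finite \<Rightarrow> real) \<Rightarrow> ('x \<Rightarrow> 'z \<Rightarrow> real) \<Rightarrow> 'z \<Rightarrow> real" where
  "PZ PX WY WZ z = (\<Sum>y\<in>UNIV. PYZ PX WY WZ y z)"

definition info_dens :: "('x::finite \<Rightarrow> real) \<Rightarrow> ('x \<Rightarrow> 'y::finite \<Rightarrow> real) \<Rightarrow> ('x \<Rightarrow> 'z::finite \<Rightarrow> real) \<Rightarrow> 'y \<Rightarrow> 'z \<Rightarrow> real" where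
  "info_dens PX WY WZ y z =
     ln (PYZ PX WY WZ y z / (PY PX WY WZ y * PZ PX WY WZ z))"

text \<open>C_bio = I(P_Y, P_{Z|Y}) = E[info density] (expectation over the support)\<close>
definition C_bio :: "('x::finite \<Rightarrow> real) \<Rightarrow> ('x \<Rightarrow> 'y::finite \<Rightarrow> real) \<Rightarrow> ('x \<Rightarrow> 'z::finite \<Rightarrow> real) \<Rightarrow> real" where
  "C_bio PX WY WZ = (\<Sum>(y,z)\<in>{(y,z). PYZ PX WY WZ y z > 0}.
      PYZ PX WY WZ y z * info_dens PX WY WZ y z)"

definition V_bio :: "('x::finite \<Rightarrow> real) \<Rightarrow> ('x \<Rightarrow> 'y::finite \<Rightarrow> real) \<Rightarrow> ('x \<Rightarrow> 'z::finite \<Rightarrow> real) \<Rightarrow> real" where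
  "V_bio PX WY WZ = (\<Sum>(y,z)\<in>{(y,z). PYZ PX WY WZ y z > 0}.
      PYZ PX WY WZ y z * (info_dens PX WY WZ y z - C_bio PX WY WZ) ^ 2)"

end

theory Submission
  imports Defs
begin



lemma exp_taylor2: fixes x :: real
  shows "\<bar>exp x - 1 - x\<bar> \<le> x\<^sup>2 * exp \<bar>x\<bar> / 2"
proof -
  obtain t where t: "\<bar>t\<bar> \<le> \<bar>x\<bar>" "exp x = (\<Sum>m<2. (x ^ m) / fact m) + (exp t / fact 2) * x ^ 2"
    using Maclaurin_exp_le[of x 2] by blast
  have "exp x - 1 - x = exp t * x\<^sup>2 / 2" using t(2) by (simp add: numeral_2_eq_2)
  moreover have "exp t * x\<^sup>2 \<le> exp \<bar>x\<bar> * x\<^sup>2" using t(1) by (intro mult_right_mono) auto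
  moreover have "exp t * x\<^sup>2 \<ge> 0" by simp
  ultimately have "\<bar>exp x - 1 - x\<bar> = exp t * x\<^sup>2 / 2" by (metis abs_of_nonneg divide_nonneg_pos zero_less_numeral)
  then show ?thesis using \<open>exp t * x\<^sup>2 \<le> exp \<bar>x\<bar> * x\<^sup>2\<close> by (simp add: mult.commute divide_right_mono)
qed

lemma exp_taylor3_upper: fixes x :: real
  shows "exp x \<le> 1 + x + x\<^sup>2 / 2 + \<bar>x\<bar>^3 * exp \<bar>x\<bar> / 6"
proof -
  obtain t where t: "\<bar>t\<bar> \<le> \<bar>x\<bar>" "exp x = (\<Sum>m<3. (x ^ m) / fact m) + (exp t / fact 3) * x ^ 3"
    using Maclaurin_exp_le[of x 3] by blast
  have f: "fact 3 = (6::real)" by (simp add: fact_numeral)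
  have "exp x = 1 + x + x\<^sup>2 / 2 + exp t * x^3 / 6" using t(2) by (simp add: eval_nat_numeral f)
  moreover have "exp t * x^3 \<le> exp \<bar>x\<bar> * \<bar>x\<bar>^3"
  proof -
    have "exp t * x^3 \<le> exp t * \<bar>x\<bar>^3" by (intro mult_left_mono) (auto simp: power_abs[symmetric])
    also have "\<dots> \<le> exp \<bar>x\<bar> * \<bar>x\<bar>^3" using t(1) by (intro mult_right_mono) auto
    finally show ?thesis .
  qed
  ultimately show ?thesis by (simp add: mult.commute)
qed

lemma exp_taylor4_lower: fixes x :: real
  shows "1 + x + x\<^sup>2 / 2 + x^3 / 6 \<le> exp x"
proof -
  obtain t where t: "\<bar>t\<bar> \<le> \<bar>x\<bar>" "exp x = (\<Sum>m<4. (x ^ m) / fact m) + (exp t / fact 4) * x ^ 4"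
    using Maclaurin_exp_le[of x 4] by blast
  have f: "fact 3 = (6::real)" "fact 4 = (24::real)" by (simp_all add: fact_numeral)
  have "exp x = 1 + x + x\<^sup>2 / 2 + x^3/6 + exp t * x^4 / 24" using t(2) by (simp add: eval_nat_numeral f)
  moreover have "exp t * x^4 \<ge> 0" by (simp add: zero_le_even_power)
  ultimately show ?thesis by simp
qed




lemma finite_seqs[simp]: "finite (seqs n :: (nat \<Rightarrow> 'a::finite) set)"
  unfolding seqs_def by (intro finite_PiE) auto

lemma sum_seqs_prod:
  fixes F :: "nat \<Rightarrow> 'a::finite \<Rightarrow> real"
  shows "(\<Sum>x\<in>seqs n. \<Prod>i<n. F i (x i)) = (\<Prod>i<n. \<Sum>a\<in>UNIV. F i a)"
  unfolding seqs_def by (subst prod_sum_PiE) auto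

lemma pmf_on_nonneg: "pmf_on q \<Longrightarrow> 0 \<le> q a" by (simp add: pmf_on_def)
lemma pmf_on_sum: "pmf_on q \<Longrightarrow> (\<Sum>a\<in>UNIV. q a) = 1" by (simp add: pmf_on_def)

lemma iid_nonneg: "pmf_on q \<Longrightarrow> 0 \<le> iid n q x"
  unfolding iid_def by (intro prod_nonneg) (auto simp: pmf_on_def)

lemma iid_sum: "pmf_on q \<Longrightarrow> (\<Sum>x\<in>seqs n. iid n q x) = 1"
  unfolding iid_def by (subst sum_seqs_prod) (simp add: pmf_on_def)

definition Pr :: "('a::finite \<Rightarrow> real) \<Rightarrow> ('a \<Rightarrow> real) \<Rightarrow> nat \<Rightarrow> (real \<Rightarrow> bool) \<Rightarrow> real" where
  "Pr q g n P = (\<Sum>x\<in>seqs n. iid n q x * (if P (\<Sum>i<n. g (x i)) then 1 else 0))"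

lemma Pr_nonneg: "pmf_on q \<Longrightarrow> 0 \<le> Pr q g n P"
  unfolding Pr_def by (intro sum_nonneg) (auto simp: iid_nonneg)

lemma Pr_compl: "pmf_on q \<Longrightarrow> Pr q g n (\<lambda>s. \<not> P s) = 1 - Pr q g n P"
proof -
  assume q: "pmf_on q"
  have "Pr q g n (\<lambda>s. \<not> P s) + Pr q g n P = (\<Sum>x\<in>seqs n. iid n q x)"
    unfolding Pr_def sum.distrib[symmetric] by (intro sum.cong) auto
  then show ?thesis using iid_sum[OF q] by simp
qed

lemma Pr_le1: "pmf_on q \<Longrightarrow> Pr q g n P \<le> 1"
  using Pr_compl[of q g n "\<lambda>s. \<not> P s"] Pr_nonneg[of q g n] by auto

lemma Pr_mono: "pmf_on q \<Longrightarrow> (\<And>s. P s \<Longrightarrow> P' s) \<Longrightarrow> Pr q g n P \<le> Pr q g n P'"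
  unfolding Pr_def by (intro sum_mono mult_left_mono) (auto simp: iid_nonneg)

lemma Pr_neg: "Pr q (\<lambda>a. - g a) n P = Pr q g n (\<lambda>s. P (- s))"
  unfolding Pr_def by (simp add: sum_negf)

lemma iid_exp: "iid n q x * exp (l * (\<Sum>i<n. g (x i))) = (\<Prod>i<n. q (x i) * exp (l * g (x i)))"
  unfolding iid_def by (simp add: sum_distrib_left exp_sum prod.distrib)

lemma mgf: fixes q :: "'a::finite \<Rightarrow> real" shows "(\<Sum>x\<in>seqs n. iid n q x * exp (l * (\<Sum>i<n. g (x i)))) = (\<Sum>a\<in>UNIV. q a * exp (l * g a)) ^ n"
  unfolding iid_exp using sum_seqs_prod[of "\<lambda>i a. q a * exp (l * g a)" n] by simp

lemma chernoff:
  assumes q: "pmf_on q" and l: "0 \<le> l"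
  shows "Pr q g n (\<lambda>s. t \<le> s) \<le> exp (- l * t) * (\<Sum>a\<in>UNIV. q a * exp (l * g a)) ^ n"
proof -
  have "Pr q g n (\<lambda>s. t \<le> s) \<le> (\<Sum>x\<in>seqs n. iid n q x * (exp (- l * t) * exp (l * (\<Sum>i<n. g (x i)))))"
    unfolding Pr_def
  proof (intro sum_mono mult_left_mono)
    fix x :: "nat \<Rightarrow> 'a"
    let ?s = "\<Sum>i<n. g (x i)"
    show "(if t \<le> ?s then 1 else 0) \<le> exp (- l * t) * exp (l * ?s)"
    proof (cases "t \<le> ?s")
      case True
      then have "0 \<le> l * (?s - t)" using l by simp
      then have "1 \<le> exp (l * (?s - t))" by simp
      then show ?thesis using True by (simp add: exp_add[symmetric] algebra_simps)
    qed auto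
  qed (auto simp: iid_nonneg q)
  also have "\<dots> = exp (- l * t) * (\<Sum>x\<in>seqs n. iid n q x * exp (l * (\<Sum>i<n. g (x i))))"
    by (simp add: sum_distrib_left algebra_simps)
  finally show ?thesis by (simp add: mgf)
qed

lemma second_moment:
  assumes p: "pmf_on p"
  shows "(\<Sum>x\<in>seqs n. iid n p x * (\<Sum>i<n. h (x i))\<^sup>2)
     = real n * (\<Sum>a\<in>UNIV. p a * (h a)\<^sup>2) + (real n * real n - real n) * (\<Sum>a\<in>UNIV. p a * h a)\<^sup>2"
proof -
  let ?E1 = "\<Sum>a\<in>UNIV. p a * h a" and ?E2 = "\<Sum>a\<in>UNIV. p a * (h a)\<^sup>2"
  have key: "(\<Sum>x\<in>seqs n. iid n p x * (h (x i) * h (x j))) = (if i = j then ?E2 else ?E1 * ?E1)"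
    if ij: "i < n" "j < n" for i j
  proof -
    have "(\<Sum>x\<in>seqs n. iid n p x * (h (x i) * h (x j)))
        = (\<Sum>x\<in>seqs n. \<Prod>k<n. p (x k) * (if k = i then h (x k) else 1) * (if k = j then h (x k) else 1))"
      using ij by (simp add: iid_def prod.distrib mult.assoc)
    also have "\<dots> = (\<Prod>k<n. \<Sum>a\<in>UNIV. p a * (if k = i then h a else 1) * (if k = j then h a else 1))"
      by (rule sum_seqs_prod)
    also have "\<dots> = (if i = j then ?E2 else ?E1 * ?E1)"
    proof (cases "i = j")
      case True
      have "(\<Prod>k<n. \<Sum>a\<in>UNIV. p a * (if k = i then h a else 1) * (if k = j then h a else 1))
          = (\<Prod>k<n. if k = i then ?E2 else 1)"
        using True p by (intro prod.cong) (auto simp: pmf_on_def power2_eq_square mult.assoc)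
      then show ?thesis using True ij by simp
    next
      case False
      have "(\<Prod>k<n. \<Sum>a\<in>UNIV. p a * (if k = i then h a else 1) * (if k = j then h a else 1))
          = (\<Prod>k<n. (if k = i then ?E1 else 1) * (if k = j then ?E1 else 1))"
        using False p by (intro prod.cong) (auto simp: pmf_on_def)
      then show ?thesis using False ij by (simp add: prod.distrib)
    qed
    finally show ?thesis .
  qed
  have "(\<Sum>x\<in>seqs n. iid n p x * (\<Sum>i<n. h (x i))\<^sup>2)
      = (\<Sum>x\<in>seqs n. \<Sum>i<n. \<Sum>j<n. iid n p x * (h (x i) * h (x j)))"
  proof (intro sum.cong refl)
    fix x :: "nat \<Rightarrow> 'a"
    have "(\<Sum>i<n. h (x i))\<^sup>2 = (\<Sum>i<n. \<Sum>j<n. h (x i) * h (x j))"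
      unfolding power2_eq_square by (rule sum_product)
    then show "iid n p x * (\<Sum>i<n. h (x i))\<^sup>2 = (\<Sum>i<n. \<Sum>j<n. iid n p x * (h (x i) * h (x j)))"
      by (simp add: sum_distrib_left)
  qed
  also have "\<dots> = (\<Sum>i<n. \<Sum>j<n. \<Sum>x\<in>seqs n. iid n p x * (h (x i) * h (x j)))"
    by (simp add: sum.swap[of _ "seqs n"])
  also have "\<dots> = (\<Sum>i<n. \<Sum>j<n. if i = j then ?E2 else ?E1 * ?E1)"
    using key by simp
  also have "\<dots> = (\<Sum>i<n. ?E2 + (real n - 1) * (?E1 * ?E1))"
  proof (intro sum.cong refl)
    fix i assume i: "i \<in> {..<n}"
    have "(\<Sum>j<n. if i = j then ?E2 else ?E1 * ?E1) = (\<Sum>j<n. (if i = j then ?E2 - ?E1 * ?E1 else 0) + ?E1 * ?E1)"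
      by (intro sum.cong) auto
    also have "\<dots> = ?E2 - ?E1 * ?E1 + real n * (?E1 * ?E1)"
      using i by (simp add: sum.distrib)
    finally show "(\<Sum>j<n. if i = j then ?E2 else ?E1 * ?E1) = ?E2 + (real n - 1) * (?E1 * ?E1)"
      by (simp add: algebra_simps)
  qed
  also have "\<dots> = real n * ?E2 + (real n * real n - real n) * ?E1\<^sup>2"
    by (simp add: algebra_simps power2_eq_square)
  finally show ?thesis .
qed

lemma chebyshev:
  assumes p: "pmf_on p" and d: "d > 0"
  shows "Pr p g n (\<lambda>s. d \<le> \<bar>s - real n * c\<bar>)
     \<le> (real n * (\<Sum>a\<in>UNIV. p a * (g a - c)\<^sup>2) + real n * real n * (\<Sum>a\<in>UNIV. p a * (g a - c))\<^sup>2) / d\<^sup>2"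
proof -
  have "Pr p g n (\<lambda>s. d \<le> \<bar>s - real n * c\<bar>) \<le> (\<Sum>x\<in>seqs n. iid n p x * ((\<Sum>i<n. g (x i) - c)\<^sup>2 / d\<^sup>2))"
    unfolding Pr_def
  proof (intro sum_mono mult_left_mono)
    fix x :: "nat \<Rightarrow> 'a"
    have eq: "(\<Sum>i<n. g (x i) - c) = (\<Sum>i<n. g (x i)) - real n * c" by (simp add: sum_subtractf)
    show "(if d \<le> \<bar>(\<Sum>i<n. g (x i)) - real n * c\<bar> then 1 else 0) \<le> (\<Sum>i<n. g (x i) - c)\<^sup>2 / d\<^sup>2"
    proof (cases "d \<le> \<bar>(\<Sum>i<n. g (x i)) - real n * c\<bar>")
      case True
      then have "d\<^sup>2 \<le> ((\<Sum>i<n. g (x i)) - real n * c)\<^sup>2"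
        using d by (metis abs_le_square_iff abs_of_pos)
      then show ?thesis using True d eq by simp
    qed simp
  qed (auto simp: iid_nonneg p)
  also have "\<dots> = (\<Sum>x\<in>seqs n. iid n p x * (\<Sum>i<n. g (x i) - c)\<^sup>2) / d\<^sup>2"
    by (simp add: sum_divide_distrib)
  also have "\<dots> = (real n * (\<Sum>a\<in>UNIV. p a * (g a - c)\<^sup>2) + (real n * real n - real n) * (\<Sum>a\<in>UNIV. p a * (g a - c))\<^sup>2) / d\<^sup>2"
    by (subst second_moment[OF p]) simp
  also have "\<dots> \<le> (real n * (\<Sum>a\<in>UNIV. p a * (g a - c)\<^sup>2) + real n * real n * (\<Sum>a\<in>UNIV. p a * (g a - c))\<^sup>2) / d\<^sup>2"
    by (intro divide_right_mono add_left_mono mult_right_mono) auto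
  finally show ?thesis .
qed




locale mdset =
  fixes q :: "'a::finite \<Rightarrow> real" and g :: "'a \<Rightarrow> real" and V B :: real
  assumes q: "pmf_on q" and mean: "(\<Sum>a\<in>UNIV. q a * g a) = 0"
    and Vdef: "V = (\<Sum>a\<in>UNIV. q a * (g a)\<^sup>2)" and Vpos: "V > 0"
    and gB: "\<And>a. \<bar>g a\<bar> \<le> B" and B0: "B \<ge> 0"
begin

lemma qn: "0 \<le> q a" using q by (simp add: pmf_on_def)
lemma qs: "(\<Sum>a\<in>UNIV. q a) = 1" using q by (simp add: pmf_on_def)

lemma lgB: "0 \<le> l \<Longrightarrow> \<bar>l * g a\<bar> \<le> l * B"
  using gB[of a] by (simp add: abs_mult mult_left_mono)

lemma lgB2: "0 \<le> l \<Longrightarrow> (l * g a)\<^sup>2 \<le> (l * B)\<^sup>2"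
  using lgB[of l a] B0 by (metis abs_le_square_iff abs_of_nonneg zero_le_mult_iff)

lemma lgB3: "0 \<le> l \<Longrightarrow> \<bar>(l * g a)^3\<bar> \<le> (l * B)^3"
  using lgB[of l a] by (metis power_abs power_mono abs_ge_zero)

lemma lin2: "(\<Sum>a\<in>UNIV. q a * (\<alpha> + \<beta> * g a + \<gamma> * (g a)\<^sup>2)) = \<alpha> + \<gamma> * V"
proof -
  have "(\<Sum>a\<in>UNIV. q a * (\<alpha> + \<beta> * g a + \<gamma> * (g a)\<^sup>2)) = (\<Sum>a\<in>UNIV. \<alpha> * q a + \<beta> * (q a * g a) + \<gamma> * (q a * (g a)\<^sup>2))"
    by (intro sum.cong) (auto simp: algebra_simps)
  also have "\<dots> = \<alpha> * (\<Sum>a\<in>UNIV. q a) + \<beta> * (\<Sum>a\<in>UNIV. q a * g a) + \<gamma> * (\<Sum>a\<in>UNIV. q a * (g a)\<^sup>2)"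
    by (simp add: sum.distrib sum_distrib_left)
  finally show ?thesis using qs mean Vdef by simp
qed

lemma mgf_ge1: "1 \<le> (\<Sum>a\<in>UNIV. q a * exp (l * g a))"
proof -
  have "(\<Sum>a\<in>UNIV. q a * (1 + l * g a)) \<le> (\<Sum>a\<in>UNIV. q a * exp (l * g a))"
    by (intro sum_mono mult_left_mono) (auto simp: qn)
  moreover have "(\<Sum>a\<in>UNIV. q a * (1 + l * g a)) = 1"
    using qs mean by (simp add: algebra_simps sum.distrib sum_distrib_left[symmetric])
  ultimately show ?thesis by simp
qed

lemma mgf_upper:
  assumes l: "0 \<le> l"
  shows "(\<Sum>a\<in>UNIV. q a * exp (l * g a)) \<le> 1 + l\<^sup>2 * V / 2 + l^3 * B^3 * exp (l * B) / 6"
proof -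
  have "(\<Sum>a\<in>UNIV. q a * exp (l * g a)) \<le> (\<Sum>a\<in>UNIV. q a * (1 + l * g a + l\<^sup>2 * (g a)\<^sup>2 / 2 + l^3 * B^3 * exp (l * B) / 6))"
  proof (intro sum_mono mult_left_mono qn)
    fix a
    have "exp (l * g a) \<le> 1 + l * g a + (l * g a)\<^sup>2 / 2 + \<bar>l * g a\<bar>^3 * exp \<bar>l * g a\<bar> / 6"
      by (rule exp_taylor3_upper)
    also have "\<bar>l * g a\<bar>^3 * exp \<bar>l * g a\<bar> \<le> (l * B)^3 * exp (l * B)"
      using lgB[OF l, of a] by (intro mult_mono power_mono) auto
    finally show "exp (l * g a) \<le> 1 + l * g a + l\<^sup>2 * (g a)\<^sup>2 / 2 + l^3 * B^3 * exp (l * B) / 6"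
      by (simp add: power_mult_distrib)
  qed
  also have "\<dots> = 1 + l^3 * B^3 * exp (l * B) / 6 + (l\<^sup>2 / 2) * V"
    using lin2[of "1 + l^3 * B^3 * exp (l * B) / 6" l "l\<^sup>2 / 2"] by (simp add: algebra_simps)
  finally show ?thesis by (simp add: algebra_simps)
qed

lemma mgf_upper2:
  assumes l: "0 \<le> l"
  shows "(\<Sum>a\<in>UNIV. q a * exp (l * g a)) \<le> 1 + l\<^sup>2 * B\<^sup>2 * exp (l * B) / 2"
proof -
  have "(\<Sum>a\<in>UNIV. q a * exp (l * g a)) \<le> (\<Sum>a\<in>UNIV. q a * (1 + l * g a + l\<^sup>2 * B\<^sup>2 * exp (l * B) / 2))"
  proof (intro sum_mono mult_left_mono qn)
    fix a
    have "exp (l * g a) - 1 - l * g a \<le> (l * g a)\<^sup>2 * exp \<bar>l * g a\<bar> / 2"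
      using exp_taylor2[of "l * g a"] by linarith
    also have "(l * g a)\<^sup>2 * exp \<bar>l * g a\<bar> \<le> (l * B)\<^sup>2 * exp (l * B)"
      using lgB[OF l, of a] lgB2[OF l, of a] by (intro mult_mono) auto
    finally show "exp (l * g a) \<le> 1 + l * g a + l\<^sup>2 * B\<^sup>2 * exp (l * B) / 2"
      by (simp add: power_mult_distrib)
  qed
  also have "\<dots> = 1 + l\<^sup>2 * B\<^sup>2 * exp (l * B) / 2"
  proof -
    have "(\<Sum>a\<in>UNIV. q a * (1 + l * g a + l\<^sup>2 * B\<^sup>2 * exp (l * B) / 2))
        = (\<Sum>a\<in>UNIV. q a * ((1 + l\<^sup>2 * B\<^sup>2 * exp (l * B) / 2) + l * g a + 0 * (g a)\<^sup>2))"
      by (intro sum.cong) (auto simp: algebra_simps)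
    then show ?thesis using lin2[of "1 + l\<^sup>2 * B\<^sup>2 * exp (l * B) / 2" l 0] by simp
  qed
  finally show ?thesis .
qed

lemma mgf_lower:
  assumes l: "0 \<le> l"
  shows "1 + l\<^sup>2 * V / 2 - l^3 * B^3 / 6 \<le> (\<Sum>a\<in>UNIV. q a * exp (l * g a))"
proof -
  have "(\<Sum>a\<in>UNIV. q a * (1 + l * g a + l\<^sup>2 * (g a)\<^sup>2 / 2 - l^3 * B^3 / 6)) \<le> (\<Sum>a\<in>UNIV. q a * exp (l * g a))"
  proof (intro sum_mono mult_left_mono qn)
    fix a
    have "- ((l * B)^3) \<le> (l * g a)^3"
    proof -
      have "\<bar>(l * g a)^3\<bar> \<le> (l * B)^3"
        using lgB3[OF l, of a] by simp
      then show ?thesis by linarith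
    qed
    then have "1 + l * g a + l\<^sup>2 * (g a)\<^sup>2 / 2 - l^3 * B^3 / 6 \<le> 1 + l * g a + (l * g a)\<^sup>2 / 2 + (l * g a)^3 / 6"
      by (simp add: power_mult_distrib)
    also have "\<dots> \<le> exp (l * g a)" by (rule exp_taylor4_lower)
    finally show "1 + l * g a + l\<^sup>2 * (g a)\<^sup>2 / 2 - l^3 * B^3 / 6 \<le> exp (l * g a)" .
  qed
  moreover have "(\<Sum>a\<in>UNIV. q a * (1 + l * g a + l\<^sup>2 * (g a)\<^sup>2 / 2 - l^3 * B^3 / 6)) = 1 + l\<^sup>2 * V / 2 - l^3 * B^3 / 6"
    using lin2[of "1 - l^3 * B^3 / 6" l "l\<^sup>2 / 2"] by (simp add: algebra_simps)
  ultimately show ?thesis by simp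
qed

lemma tilt_mean:
  assumes l: "0 \<le> l"
  shows "\<bar>(\<Sum>a\<in>UNIV. q a * exp (l * g a) * g a) - l * V\<bar> \<le> l\<^sup>2 * B^3 * exp (l * B) / 2"
proof -
  have "(\<Sum>a\<in>UNIV. q a * (g a * (exp (l * g a) - 1 - l * g a))) = (\<Sum>a\<in>UNIV. q a * exp (l * g a) * g a - (q a * g a) - l * (q a * (g a)\<^sup>2))"
    by (intro sum.cong) (auto simp: algebra_simps power2_eq_square)
  also have "\<dots> = (\<Sum>a\<in>UNIV. q a * exp (l * g a) * g a) - (\<Sum>a\<in>UNIV. q a * g a) - l * (\<Sum>a\<in>UNIV. q a * (g a)\<^sup>2)"
    by (simp add: sum_subtractf sum_distrib_left)
  finally have eq: "(\<Sum>a\<in>UNIV. q a * exp (l * g a) * g a) - l * V = (\<Sum>a\<in>UNIV. q a * (g a * (exp (l * g a) - 1 - l * g a)))"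
    using mean Vdef by simp
  have "\<bar>\<Sum>a\<in>UNIV. q a * (g a * (exp (l * g a) - 1 - l * g a))\<bar> \<le> (\<Sum>a\<in>UNIV. q a * (l\<^sup>2 * B^3 * exp (l * B) / 2))"
  proof (rule order_trans[OF sum_abs], intro sum_mono)
    fix a
    have "\<bar>exp (l * g a) - 1 - l * g a\<bar> \<le> (l * g a)\<^sup>2 * exp \<bar>l * g a\<bar> / 2" by (rule exp_taylor2)
    also have "\<dots> \<le> (l * B)\<^sup>2 * exp (l * B) / 2"
      using lgB[OF l, of a] lgB2[OF l, of a] by (intro divide_right_mono mult_mono) auto
    finally have e: "\<bar>exp (l * g a) - 1 - l * g a\<bar> \<le> (l * B)\<^sup>2 * exp (l * B) / 2" .
    have ga: "\<bar>g a * (exp (l * g a) - 1 - l * g a)\<bar> \<le> B * ((l * B)\<^sup>2 * exp (l * B) / 2)"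
      unfolding abs_mult using gB[of a] e by (intro mult_mono) auto
    then show "\<bar>q a * (g a * (exp (l * g a) - 1 - l * g a))\<bar> \<le> q a * (l\<^sup>2 * B^3 * exp (l * B) / 2)"
      using qn[of a] mult_left_mono[OF ga qn[of a]]
      by (simp add: abs_mult power_mult_distrib power3_eq_cube power2_eq_square mult_ac)
  qed
  also have "\<dots> = (\<Sum>a\<in>UNIV. q a) * (l\<^sup>2 * B^3 * exp (l * B) / 2)" by (simp add: sum_distrib_right)
  also have "\<dots> = l\<^sup>2 * B^3 * exp (l * B) / 2" using qs by simp
  finally show ?thesis using eq by simp
qed

end



lemma alg1:
  fixes n \<xi> \<rho> V B K :: real
  assumes "n > 0" "\<xi> > 0" "\<rho> > 0" "V > 0"
  shows "(n * (B + 1)\<^sup>2 + n * n * ((\<xi> * (1 + \<rho>) / V)\<^sup>2 * K)\<^sup>2) / (n * \<rho> * \<xi> / 4)\<^sup>2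
     = 16 * (B + 1)\<^sup>2 / (\<rho>\<^sup>2 * (n * \<xi>\<^sup>2)) + 16 * \<xi>\<^sup>2 * (1 + \<rho>)^4 * K\<^sup>2 / (V^4 * \<rho>\<^sup>2)"
proof -
  have 1: "n * (B + 1)\<^sup>2 / (n * \<rho> * \<xi> / 4)\<^sup>2 = 16 * (B + 1)\<^sup>2 / (\<rho>\<^sup>2 * (n * \<xi>\<^sup>2))"
    using assms by (simp add: field_simps power2_eq_square)
  have 2: "n * n * ((\<xi> * (1 + \<rho>) / V)\<^sup>2 * K)\<^sup>2 / (n * \<rho> * \<xi> / 4)\<^sup>2 = 16 * \<xi>\<^sup>2 * (1 + \<rho>)^4 * K\<^sup>2 / (V^4 * \<rho>\<^sup>2)"
    using assms by (simp add: field_simps power2_eq_square power4_eq_xxxx)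
  show ?thesis using 1 2 by (simp add: add_divide_distrib)
qed

lemma alg2:
  fixes n \<xi> \<rho> V B :: real
  assumes "V > 0"
  shows "- (\<xi> * (1 + \<rho>) / V) * (n * (\<xi> * (1 + \<rho>)) + n * \<rho> * \<xi> / 4) + n * (((\<xi> * (1 + \<rho>) / V)\<^sup>2 * V / 2 - (\<xi> * (1 + \<rho>) / V)^3 * B^3 / 6) - ((\<xi> * (1 + \<rho>) / V)\<^sup>2 * V / 2)\<^sup>2)
      = - (n * \<xi>\<^sup>2) * ((1 + \<rho>) * (1 + 5 * \<rho> / 4) / V - (1 + \<rho>)\<^sup>2 / (2 * V)
           + \<xi> * (1 + \<rho>)^3 * B^3 / (6 * V^3) + \<xi>\<^sup>2 * (1 + \<rho>)^4 / (4 * V\<^sup>2))"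
  using assms by (simp add: field_simps power2_eq_square power3_eq_cube power4_eq_xxxx)

context mdset begin

definition Mg :: "real \<Rightarrow> real" where "Mg l = (\<Sum>a\<in>UNIV. q a * exp (l * g a))"
definition tilt :: "real \<Rightarrow> 'a \<Rightarrow> real" where "tilt l a = q a * exp (l * g a) / Mg l"

lemma Mg_pos: "Mg l > 0" using mgf_ge1[of l] by (simp add: Mg_def)

lemma tilt_pmf: "pmf_on (tilt l)"
  unfolding pmf_on_def tilt_def using Mg_pos[of l]
  by (auto simp: qn sum_divide_distrib[symmetric] Mg_def)

lemma iid_tilt: "iid n (tilt l) x = iid n q x * exp (l * (\<Sum>i<n. g (x i))) / Mg l ^ n"
  unfolding iid_exp unfolding iid_def tilt_def by (simp add: prod_dividef)

lemma sum_tilt: "(\<Sum>x\<in>seqs n. iid n q x * exp (l * (\<Sum>i<n. g (x i))) * (if P (\<Sum>i<n. g (x i)) then 1 else 0))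
   = Mg l ^ n * Pr (tilt l) g n P"
  unfolding Pr_def iid_tilt using Mg_pos[of l]
  by (simp add: sum_distrib_left)

lemma md_upper_step:
  assumes xi: "\<xi> > 0"
  shows "Pr q g n (\<lambda>s. real n * \<xi> * (1 + r) \<le> s)
     \<le> exp (- (real n * \<xi>\<^sup>2) * ((1 + r) / V - 1 / (2 * V) - \<xi> * B^3 * exp (\<xi> * B / V) / (6 * V^3)))"
proof -
  define l where "l = \<xi> / V"
  have l0: "0 \<le> l" using xi Vpos by (simp add: l_def)
  define u where "u = l\<^sup>2 * V / 2 + l^3 * B^3 * exp (l * B) / 6"
  have "Pr q g n (\<lambda>s. real n * \<xi> * (1 + r) \<le> s) \<le> exp (- l * (real n * \<xi> * (1 + r))) * Mg l ^ n"
    using chernoff[OF q l0] by (simp add: Mg_def)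
  also have "\<dots> \<le> exp (- l * (real n * \<xi> * (1 + r))) * exp u ^ n"
  proof -
    have "Mg l \<le> 1 + u" using mgf_upper[OF l0] by (simp add: Mg_def u_def)
    also have "\<dots> \<le> exp u" by simp
    finally show ?thesis using Mg_pos[of l] by (intro mult_left_mono power_mono) auto
  qed
  also have "\<dots> = exp (- l * (real n * \<xi> * (1 + r))) * exp (real n * u)"
    by (simp add: exp_of_nat_mult)
  also have "\<dots> = exp (- l * (real n * \<xi> * (1 + r)) + real n * u)"
    by (simp only: exp_add)
  also have "- l * (real n * \<xi> * (1 + r)) + real n * u
      = - (real n * \<xi>\<^sup>2) * ((1 + r) / V - 1 / (2 * V) - \<xi> * B^3 * exp (\<xi> * B / V) / (6 * V^3))"
    using Vpos unfolding u_def l_def by (simp add: field_simps power2_eq_square power3_eq_cube)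
  finally show ?thesis .
qed

lemma md_lower_step:
  assumes xi: "\<xi> > 0" and rho: "\<rho> > 0" "\<rho> \<le> 1" and n: "n > 0" and r: "r \<le> \<rho> / 2"
    and h1: "\<xi> * (1 + \<rho>) / V \<le> 1" and h2: "\<xi> * (1 + \<rho>) \<le> 1"
    and h3: "\<xi> * (1 + \<rho>) / V * B^3 \<le> 3 * V" and h4: "(\<xi> * (1 + \<rho>) / V)\<^sup>2 * V \<le> 2"
    and cheb: "16 * (B + 1)\<^sup>2 / (\<rho>\<^sup>2 * (real n * \<xi>\<^sup>2))
        + 16 * \<xi>\<^sup>2 * (1 + \<rho>)^4 * ((B^3 + V * B\<^sup>2) * exp B / 2)\<^sup>2 / (V^4 * \<rho>\<^sup>2) \<le> 1 / 2"
  shows "exp (- (real n * \<xi>\<^sup>2) * ((1 + \<rho>) * (1 + 5 * \<rho> / 4) / V - (1 + \<rho>)\<^sup>2 / (2 * V)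
           + \<xi> * (1 + \<rho>)^3 * B^3 / (6 * V^3) + \<xi>\<^sup>2 * (1 + \<rho>)^4 / (4 * V\<^sup>2))) / 2
     \<le> Pr q g n (\<lambda>s. real n * \<xi> * (1 + r) < s)"
proof -
  define l where "l = \<xi> * (1 + \<rho>) / V"
  define c where "c = \<xi> * (1 + \<rho>)"
  define d where "d = real n * \<rho> * \<xi> / 4"
  define Kc where "Kc = (B^3 + V * B\<^sup>2) * exp B / 2"
  define p where "p = tilt l"
  define m where "m = (\<Sum>a\<in>UNIV. p a * g a)"
  have l0: "0 \<le> l" using xi rho Vpos by (simp add: l_def)
  have l1: "l \<le> 1" using h1 by (simp add: l_def)
  have c0: "0 \<le> c" "c \<le> 1" using xi rho h2 by (auto simp: c_def)
  have cl: "c = l * V" using Vpos by (simp add: c_def l_def)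
  have d0: "d > 0" using n rho xi by (simp add: d_def)
  have p: "pmf_on p" unfolding p_def by (rule tilt_pmf)
  have M1: "1 \<le> Mg l" using mgf_ge1 by (simp add: Mg_def)
  have mc: "\<bar>m - c\<bar> \<le> l\<^sup>2 * Kc"
  proof -
    define T where "T = (\<Sum>a\<in>UNIV. q a * exp (l * g a) * g a)"
    have mT: "m = T / Mg l" unfolding m_def T_def p_def tilt_def by (simp add: sum_divide_distrib)
    have T: "\<bar>T - l * V\<bar> \<le> l\<^sup>2 * B^3 * exp (l * B) / 2" unfolding T_def by (rule tilt_mean[OF l0])
    have M2: "Mg l - 1 \<le> l\<^sup>2 * B\<^sup>2 * exp (l * B) / 2" using mgf_upper2[OF l0] by (simp add: Mg_def)
    have meq: "m - c = (T - l * V) / Mg l - l * V * (Mg l - 1) / Mg l"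
      using Mg_pos[of l] by (simp add: mT cl field_simps)
    have "\<bar>m - c\<bar> \<le> \<bar>(T - l * V) / Mg l\<bar> + \<bar>l * V * (Mg l - 1) / Mg l\<bar>"
      unfolding meq by (rule abs_triangle_ineq4)
    also have "\<dots> = \<bar>T - l * V\<bar> / Mg l + l * V * (Mg l - 1) / Mg l"
      using M1 l0 Vpos by (simp add: abs_divide)
    also have "\<dots> \<le> \<bar>T - l * V\<bar> + l * V * (Mg l - 1)"
    proof -
      have "\<bar>T - l * V\<bar> / Mg l \<le> \<bar>T - l * V\<bar>" using M1 by (simp add: divide_le_eq mult_le_cancel_left1)
      moreover have "l * V * (Mg l - 1) / Mg l \<le> l * V * (Mg l - 1)"
        using M1 l0 Vpos mult_left_mono[of 1 "Mg l" "l * V * (Mg l - 1)"] by (simp add: divide_le_eq)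
      ultimately show ?thesis by simp
    qed
    also have "\<dots> \<le> l\<^sup>2 * B^3 * exp (l * B) / 2 + l * V * (l\<^sup>2 * B\<^sup>2 * exp (l * B) / 2)"
      using T M2 l0 Vpos by (intro add_mono mult_left_mono) auto
    also have "\<dots> \<le> l\<^sup>2 * B^3 * exp B / 2 + l\<^sup>2 * (V * B\<^sup>2 * exp B / 2)"
    proof -
      have e: "exp (l * B) \<le> exp B" using l1 B0 mult_right_mono[of l 1 B] by simp
      have 1: "l\<^sup>2 * B^3 * exp (l * B) / 2 \<le> l\<^sup>2 * B^3 * exp B / 2"
        using e B0 by (intro divide_right_mono mult_left_mono) auto
      have "l * V * (l\<^sup>2 * B\<^sup>2 * exp (l * B) / 2) \<le> 1 * V * (l\<^sup>2 * B\<^sup>2 * exp B / 2)"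
        using e l0 l1 Vpos by (intro mult_mono divide_right_mono mult_left_mono) auto
      then show ?thesis using 1 by (simp add: algebra_simps)
    qed
    also have "\<dots> = l\<^sup>2 * Kc" by (simp add: Kc_def algebra_simps)
    finally show ?thesis .
  qed
  have var: "(\<Sum>a\<in>UNIV. p a * (g a - c)\<^sup>2) \<le> (B + 1)\<^sup>2"
  proof -
    have "(\<Sum>a\<in>UNIV. p a * (g a - c)\<^sup>2) \<le> (\<Sum>a\<in>UNIV. p a * (B + 1)\<^sup>2)"
    proof (intro sum_mono mult_left_mono)
      fix a
      have "\<bar>g a - c\<bar> \<le> B + 1" using gB[of a] c0 by linarith
      then show "(g a - c)\<^sup>2 \<le> (B + 1)\<^sup>2" using B0 by (metis abs_le_square_iff abs_of_nonneg add_nonneg_nonneg zero_le_one)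
    qed (use p in \<open>auto simp: pmf_on_def\<close>)
    also have "\<dots> = (B + 1)\<^sup>2" using p by (simp add: pmf_on_def sum_distrib_right[symmetric])
    finally show ?thesis .
  qed
  have meanp: "(\<Sum>a\<in>UNIV. p a * (g a - c)) = m - c"
    using p by (simp add: m_def algebra_simps sum_subtractf sum_distrib_left[symmetric] pmf_on_def)
  have "Pr p g n (\<lambda>s. d \<le> \<bar>s - real n * c\<bar>)
      \<le> (real n * (\<Sum>a\<in>UNIV. p a * (g a - c)\<^sup>2) + real n * real n * (\<Sum>a\<in>UNIV. p a * (g a - c))\<^sup>2) / d\<^sup>2"
    by (rule chebyshev[OF p d0])
  also have "\<dots> \<le> (real n * (B + 1)\<^sup>2 + real n * real n * (l\<^sup>2 * Kc)\<^sup>2) / d\<^sup>2"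
  proof -
    have "(m - c)\<^sup>2 \<le> (l\<^sup>2 * Kc)\<^sup>2" using mc by (metis abs_le_square_iff abs_of_nonneg abs_ge_zero order_trans)
    then show ?thesis using var meanp by (intro divide_right_mono add_mono mult_left_mono) auto
  qed
  also have "\<dots> = 16 * (B + 1)\<^sup>2 / (\<rho>\<^sup>2 * (real n * \<xi>\<^sup>2))
        + 16 * \<xi>\<^sup>2 * (1 + \<rho>)^4 * Kc\<^sup>2 / (V^4 * \<rho>\<^sup>2)"
    unfolding d_def l_def by (rule alg1) (use n xi rho Vpos in auto)
  also have "\<dots> \<le> 1 / 2" using cheb by (simp add: Kc_def)
  finally have bad: "Pr p g n (\<lambda>s. d \<le> \<bar>s - real n * c\<bar>) \<le> 1 / 2" .
  have good: "1 / 2 \<le> Pr p g n (\<lambda>s. \<bar>s - real n * c\<bar> < d)"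
    using Pr_compl[OF p, of g n "\<lambda>s. d \<le> \<bar>s - real n * c\<bar>"] bad by (simp add: not_le)
  have "exp (- l * (real n * c + d)) * Mg l ^ n * Pr p g n (\<lambda>s. \<bar>s - real n * c\<bar> < d)
      = (\<Sum>x\<in>seqs n. iid n q x * exp (- l * (real n * c + d)) * exp (l * (\<Sum>i<n. g (x i))) * (if \<bar>(\<Sum>i<n. g (x i)) - real n * c\<bar> < d then 1 else 0))"
  proof -
    have "exp (- l * (real n * c + d)) * Mg l ^ n * Pr p g n (\<lambda>s. \<bar>s - real n * c\<bar> < d)
       = exp (- l * (real n * c + d)) * (Mg l ^ n * Pr (tilt l) g n (\<lambda>s. \<bar>s - real n * c\<bar> < d))"
      by (simp only: p_def mult.assoc)
    also have "\<dots> = exp (- l * (real n * c + d)) * (\<Sum>x\<in>seqs n. iid n q x * exp (l * (\<Sum>i<n. g (x i))) * (if \<bar>(\<Sum>i<n. g (x i)) - real n * c\<bar> < d then 1 else 0))"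
      using sum_tilt[of n l "\<lambda>s. \<bar>s - real n * c\<bar> < d"] by simp
    also have "\<dots> = (\<Sum>x\<in>seqs n. exp (- l * (real n * c + d)) * (iid n q x * exp (l * (\<Sum>i<n. g (x i))) * (if \<bar>(\<Sum>i<n. g (x i)) - real n * c\<bar> < d then 1 else 0)))"
      by (rule sum_distrib_left)
    finally show ?thesis by (simp only: mult_ac)
  qed
  also have "\<dots> \<le> Pr q g n (\<lambda>s. real n * \<xi> * (1 + r) < s)"
    unfolding Pr_def
  proof (intro sum_mono)
    fix x :: "nat \<Rightarrow> 'a"
    let ?s = "\<Sum>i<n. g (x i)"
    show "iid n q x * exp (- l * (real n * c + d)) * exp (l * ?s) * (if \<bar>?s - real n * c\<bar> < d then 1 else 0)
       \<le> iid n q x * (if real n * \<xi> * (1 + r) < ?s then 1 else 0)"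
    proof (cases "\<bar>?s - real n * c\<bar> < d")
      case True
      have "real n * \<xi> * (1 + r) \<le> real n * \<xi> * (1 + 3 * \<rho> / 4)"
        using n xi r rho by (intro mult_left_mono) auto
      also have "\<dots> = real n * c - d" by (simp add: c_def d_def algebra_simps)
      also have "\<dots> < ?s" using True by linarith
      finally have in1: "real n * \<xi> * (1 + r) < ?s" .
      have "?s \<le> real n * c + d" using True by linarith
      then have "l * ?s \<le> l * (real n * c + d)" using l0 by (intro mult_left_mono) auto
      then have "exp (- l * (real n * c + d)) * exp (l * ?s) \<le> 1"
        by (simp add: exp_add[symmetric])
      then show ?thesis using True in1 iid_nonneg[OF q, of n x]
        by (simp add: mult.assoc mult_left_le)
    qed (simp add: iid_nonneg[OF q])
  qed
  finally have main: "exp (- l * (real n * c + d)) * Mg l ^ n * Pr p g n (\<lambda>s. \<bar>s - real n * c\<bar> < d)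
      \<le> Pr q g n (\<lambda>s. real n * \<xi> * (1 + r) < s)" .
  define u where "u = l\<^sup>2 * V / 2 - l^3 * B^3 / 6"
  have u0: "0 \<le> u"
  proof -
    have "l^3 * B^3 = l\<^sup>2 * (l * B^3)" by (simp add: power2_eq_square power3_eq_cube)
    also have "\<dots> \<le> l\<^sup>2 * (3 * V)" using h3 by (intro mult_left_mono) (auto simp: l_def)
    also have "\<dots> = l\<^sup>2 * V * 3" by simp
    finally have "B^3 * l^3 \<le> l\<^sup>2 * V * 3" by (simp add: mult.commute)
    then show ?thesis unfolding u_def by (simp add: mult.commute)
  qed
  have u1: "u \<le> l\<^sup>2 * V / 2" using l0 B0 by (simp add: u_def)
  have u2: "l\<^sup>2 * V / 2 \<le> 1" using h4 by (simp add: l_def)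
  have "exp (real n * (u - (l\<^sup>2 * V / 2)\<^sup>2)) \<le> Mg l ^ n"
  proof -
    have "u - (l\<^sup>2 * V / 2)\<^sup>2 \<le> u - u\<^sup>2"
      using u0 u1 by (simp add: power_mono)
    also have "\<dots> \<le> ln (1 + u)" using u0 u1 u2 by (intro ln_one_plus_pos_lower_bound) auto
    finally have "exp (real n * (u - (l\<^sup>2 * V / 2)\<^sup>2)) \<le> exp (real n * ln (1 + u))"
      by (simp add: mult_left_mono)
    also have "\<dots> = (1 + u) ^ n" using u0 by (simp add: exp_of_nat_mult)
    also have "\<dots> \<le> Mg l ^ n" using mgf_lower[OF l0] u0 by (intro power_mono) (auto simp: Mg_def u_def)
    finally show ?thesis .
  qed
  then have "exp (- l * (real n * c + d)) * exp (real n * (u - (l\<^sup>2 * V / 2)\<^sup>2)) * (1 / 2)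
      \<le> exp (- l * (real n * c + d)) * Mg l ^ n * Pr p g n (\<lambda>s. \<bar>s - real n * c\<bar> < d)"
    using good Mg_pos[of l] by (intro mult_mono) auto
  also note main
  finally have fin: "exp (- l * (real n * c + d) + real n * (u - (l\<^sup>2 * V / 2)\<^sup>2)) / 2
      \<le> Pr q g n (\<lambda>s. real n * \<xi> * (1 + r) < s)"
    unfolding exp_add by simp
  have "- l * (real n * c + d) + real n * (u - (l\<^sup>2 * V / 2)\<^sup>2)
      = - (real n * \<xi>\<^sup>2) * ((1 + \<rho>) * (1 + 5 * \<rho> / 4) / V - (1 + \<rho>)\<^sup>2 / (2 * V)
           + \<xi> * (1 + \<rho>)^3 * B^3 / (6 * V^3) + \<xi>\<^sup>2 * (1 + \<rho>)^4 / (4 * V\<^sup>2))"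
    unfolding l_def c_def d_def u_def by (rule alg2) (use Vpos in auto)
  then show ?thesis using fin by simp
qed

end



context mdset begin

lemma md_upper:
  assumes xi: "\<And>n. \<xi> n > 0" "\<xi> \<longlonglongrightarrow> 0" and r: "r \<longlonglongrightarrow> 0" and eps: "\<epsilon> > 0"
  shows "eventually (\<lambda>n. Pr q g n (\<lambda>s. real n * \<xi> n * (1 + r n) \<le> s)
            \<le> exp (- (real n * (\<xi> n)\<^sup>2) * (1 / (2 * V) - \<epsilon>))) sequentially"
proof -
  define \<beta> where "\<beta> n = (1 + r n) / V - 1 / (2 * V) - \<xi> n * B^3 * exp (\<xi> n * B / V) / (6 * V^3)" for n
  have "\<beta> \<longlonglongrightarrow> (1 + 0) / V - 1 / (2 * V) - 0 * B^3 * exp (0 * B / V) / (6 * V^3)"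
    unfolding \<beta>_def by (intro tendsto_intros xi r) (use Vpos in auto)
  moreover have "(1 + 0) / V - 1 / (2 * V) - 0 * B^3 * exp (0 * B / V) / (6 * V^3) = 1 / (2 * V)"
    using Vpos by (simp add: field_simps)
  ultimately have "\<beta> \<longlonglongrightarrow> 1 / (2 * V)" by simp
  then have ev: "eventually (\<lambda>n. 1 / (2 * V) - \<epsilon> < \<beta> n) sequentially"
    using eps by (intro order_tendstoD(1)) auto
  show ?thesis using ev
  proof eventually_elim
    case (elim n)
    have "Pr q g n (\<lambda>s. real n * \<xi> n * (1 + r n) \<le> s) \<le> exp (- (real n * (\<xi> n)\<^sup>2) * \<beta> n)"
      unfolding \<beta>_def by (rule md_upper_step[OF xi(1)])
    also have "\<dots> \<le> exp (- (real n * (\<xi> n)\<^sup>2) * (1 / (2 * V) - \<epsilon>))"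
      using elim by (simp add: mult_left_mono)
    finally show ?case .
  qed
qed

lemma md_lower:
  assumes xi: "\<And>n. \<xi> n > 0" "\<xi> \<longlonglongrightarrow> 0" and r: "r \<longlonglongrightarrow> 0" and eps: "\<epsilon> > 0"
    and nxi: "filterlim (\<lambda>n. real n * (\<xi> n)\<^sup>2) at_top sequentially"
  shows "eventually (\<lambda>n. exp (- (real n * (\<xi> n)\<^sup>2) * (1 / (2 * V) + \<epsilon>))
            \<le> Pr q g n (\<lambda>s. real n * \<xi> n * (1 + r n) < s)) sequentially"
proof -
  define \<rho> where "\<rho> = min 1 (\<epsilon> * V / 8)"
  have rho: "\<rho> > 0" "\<rho> \<le> 1" "\<rho> \<le> \<epsilon> * V / 8" using eps Vpos by (auto simp: \<rho>_def)
  define Kc where "Kc = (B^3 + V * B\<^sup>2) * exp B / 2"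
  define \<gamma> where "\<gamma> n = (1 + \<rho>) * (1 + 5 * \<rho> / 4) / V - (1 + \<rho>)\<^sup>2 / (2 * V)
           + \<xi> n * (1 + \<rho>)^3 * B^3 / (6 * V^3) + (\<xi> n)\<^sup>2 * (1 + \<rho>)^4 / (4 * V\<^sup>2)" for n
  have e1: "eventually (\<lambda>n. r n < \<rho> / 2) sequentially"
    using rho by (intro order_tendstoD(2)[OF r]) auto
  have t1: "(\<lambda>n. \<xi> n * (1 + \<rho>) / V) \<longlonglongrightarrow> 0"
    using tendsto_divide[OF tendsto_mult[OF xi(2) tendsto_const[of "1 + \<rho>"]] tendsto_const[of V]] Vpos by simp
  have e2: "eventually (\<lambda>n. \<xi> n * (1 + \<rho>) / V < 1) sequentially"
    by (intro order_tendstoD(2)[OF t1]) auto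
  have e3: "eventually (\<lambda>n. \<xi> n * (1 + \<rho>) < 1) sequentially"
    using order_tendstoD(2)[OF tendsto_mult[OF xi(2) tendsto_const[of "1 + \<rho>"]], of 1] by simp
  have e4: "eventually (\<lambda>n. \<xi> n * (1 + \<rho>) / V * B^3 < 3 * V) sequentially"
    using order_tendstoD(2)[OF tendsto_mult[OF t1 tendsto_const[of "B^3"]], of "3 * V"] Vpos by simp
  have e5: "eventually (\<lambda>n. (\<xi> n * (1 + \<rho>) / V)\<^sup>2 * V < 2) sequentially"
    using order_tendstoD(2)[OF tendsto_mult[OF tendsto_power[OF t1, of 2] tendsto_const[of V]], of 2] by simp
  have t6a: "(\<lambda>n. 16 * (B + 1)\<^sup>2 / (\<rho>\<^sup>2 * (real n * (\<xi> n)\<^sup>2))) \<longlonglongrightarrow> 0"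
  proof (rule tendsto_divide_0[OF tendsto_const])
    have "filterlim (\<lambda>n. \<rho>\<^sup>2 * (real n * (\<xi> n)\<^sup>2)) at_top sequentially"
      using rho by (intro filterlim_tendsto_pos_mult_at_top[OF tendsto_const _ nxi]) auto
    then show "filterlim (\<lambda>n. \<rho>\<^sup>2 * (real n * (\<xi> n)\<^sup>2)) at_infinity sequentially"
      by (rule filterlim_at_top_imp_at_infinity)
  qed
  have t6b: "(\<lambda>n. 16 * (\<xi> n)\<^sup>2 * (1 + \<rho>)^4 * Kc\<^sup>2 / (V^4 * \<rho>\<^sup>2)) \<longlonglongrightarrow> 16 * 0\<^sup>2 * (1 + \<rho>)^4 * Kc\<^sup>2 / (V^4 * \<rho>\<^sup>2)"
    by (intro tendsto_intros xi) (use Vpos rho in auto)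
  have e6: "eventually (\<lambda>n. 16 * (B + 1)\<^sup>2 / (\<rho>\<^sup>2 * (real n * (\<xi> n)\<^sup>2))
        + 16 * (\<xi> n)\<^sup>2 * (1 + \<rho>)^4 * Kc\<^sup>2 / (V^4 * \<rho>\<^sup>2) < 1 / 2) sequentially"
    using order_tendstoD(2)[OF tendsto_add[OF t6a t6b], of "1/2"] by simp
  have t7: "\<gamma> \<longlonglongrightarrow> (1 + \<rho>) * (1 + 5 * \<rho> / 4) / V - (1 + \<rho>)\<^sup>2 / (2 * V)
           + 0 * (1 + \<rho>)^3 * B^3 / (6 * V^3) + 0\<^sup>2 * (1 + \<rho>)^4 / (4 * V\<^sup>2)"
    unfolding \<gamma>_def by (intro tendsto_intros xi) (use Vpos in auto)
  have lim7: "(1 + \<rho>) * (1 + 5 * \<rho> / 4) / V - (1 + \<rho>)\<^sup>2 / (2 * V)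
           + 0 * (1 + \<rho>)^3 * B^3 / (6 * V^3) + 0\<^sup>2 * (1 + \<rho>)^4 / (4 * V\<^sup>2) < 1 / (2 * V) + \<epsilon> / 2"
  proof -
    have "(1 + \<rho>) * (1 + 5 * \<rho> / 4) / V - (1 + \<rho>)\<^sup>2 / (2 * V) = (1 / 2 + 5 * \<rho> / 4 + 3 * \<rho>\<^sup>2 / 4) / V"
      using Vpos by (simp add: field_simps power2_eq_square)
    also have "\<dots> \<le> (1 / 2 + 2 * \<rho>) / V"
    proof -
      have "\<rho>\<^sup>2 \<le> \<rho>" using rho by (simp add: power2_eq_square mult_left_le_one_le)
      then show ?thesis using Vpos by (intro divide_right_mono) auto
    qed
    also have "\<dots> = 1 / (2 * V) + 2 * \<rho> / V" using Vpos by (simp add: field_simps)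
    also have "\<dots> < 1 / (2 * V) + \<epsilon> / 2"
    proof -
      have "2 * \<rho> / V \<le> \<epsilon> / 4" using rho Vpos by (simp add: field_simps)
      then show ?thesis using eps by simp
    qed
    finally show ?thesis by simp
  qed
  have e7: "eventually (\<lambda>n. \<gamma> n < 1 / (2 * V) + \<epsilon> / 2) sequentially"
    using t7 lim7 by (intro order_tendstoD(2)) auto
  have e8: "eventually (\<lambda>n. 2 * ln 2 / \<epsilon> \<le> real n * (\<xi> n)\<^sup>2) sequentially"
    using nxi by (simp add: filterlim_at_top)
  have e9: "eventually (\<lambda>n. n > 0) sequentially" by (rule eventually_gt_at_top)
  show ?thesis using e1 e2 e3 e4 e5 e6 e7 e8 e9
  proof eventually_elim
    case (elim n)
    have step: "exp (- (real n * (\<xi> n)\<^sup>2) * \<gamma> n) / 2 \<le> Pr q g n (\<lambda>s. real n * \<xi> n * (1 + r n) < s)"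
      unfolding \<gamma>_def
      by (rule md_lower_step[OF xi(1) rho(1,2)]) (use elim in \<open>auto simp: Kc_def\<close>)
    have nx: "0 \<le> real n * (\<xi> n)\<^sup>2" by simp
    have "exp (- (real n * (\<xi> n)\<^sup>2) * (1 / (2 * V) + \<epsilon>))
        = exp (- (real n * (\<xi> n)\<^sup>2) * (1 / (2 * V) + \<epsilon> / 2) - (real n * (\<xi> n)\<^sup>2) * (\<epsilon> / 2))"
      by (simp add: algebra_simps)
    also have "\<dots> \<le> exp (- (real n * (\<xi> n)\<^sup>2) * (1 / (2 * V) + \<epsilon> / 2) - ln 2)"
    proof -
      have "ln 2 \<le> real n * (\<xi> n)\<^sup>2 * (\<epsilon> / 2)"
        using elim(8) eps by (simp add: field_simps)
      then show ?thesis by simp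
    qed
    also have "\<dots> = exp (- (real n * (\<xi> n)\<^sup>2) * (1 / (2 * V) + \<epsilon> / 2)) / 2"
      by (simp add: exp_diff)
    also have "\<dots> \<le> exp (- (real n * (\<xi> n)\<^sup>2) * \<gamma> n) / 2"
      using elim(7) nx by (simp add: mult_left_mono)
    also note step
    finally show ?case .
  qed
qed

end



locale bio =
  fixes PX :: "'x::finite \<Rightarrow> real" and WY :: "'x \<Rightarrow> 'y::finite \<Rightarrow> real" and WZ :: "'x \<Rightarrow> 'z::finite \<Rightarrow> real"
  assumes PX: "pmf_on PX" and WY: "stoch_chan WY" and WZ: "stoch_chan WZ"
begin

abbreviation "Q \<equiv> PYZ PX WY WZ"
abbreviation "PYv \<equiv> PY PX WY WZ"
abbreviation "PZv \<equiv> PZ PX WY WZ"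
abbreviation "info \<equiv> info_dens PX WY WZ"

definition Qn :: "nat \<Rightarrow> (nat \<Rightarrow> 'y) \<Rightarrow> (nat \<Rightarrow> 'z) \<Rightarrow> real" where "Qn n y z = dmc n Q y z"
definition PYn :: "nat \<Rightarrow> (nat \<Rightarrow> 'y) \<Rightarrow> real" where "PYn n y = iid n PYv y"
definition PZn :: "nat \<Rightarrow> (nat \<Rightarrow> 'z) \<Rightarrow> real" where "PZn n z = iid n PZv z"
definition T :: "nat \<Rightarrow> (nat \<Rightarrow> 'y) \<Rightarrow> (nat \<Rightarrow> 'z) \<Rightarrow> real" where
  "T n y z = Qn n y z / (PYn n y * PZn n z)"

lemma PXn: "0 \<le> PX x" using PX by (simp add: pmf_on_def)
lemma WYn: "0 \<le> WY x y" using WY by (simp add: stoch_chan_def pmf_on_def)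
lemma WZn: "0 \<le> WZ x z" using WZ by (simp add: stoch_chan_def pmf_on_def)
lemma WYs: "(\<Sum>y\<in>UNIV. WY x y) = 1" using WY by (simp add: stoch_chan_def pmf_on_def)
lemma WZs: "(\<Sum>z\<in>UNIV. WZ x z) = 1" using WZ by (simp add: stoch_chan_def pmf_on_def)

lemma Q_nonneg: "0 \<le> Q y z"
  unfolding PYZ_def by (intro sum_nonneg mult_nonneg_nonneg PXn WYn WZn)

lemma PY_eq: "PYv y = (\<Sum>x\<in>UNIV. PX x * WY x y)"
proof -
  have "PYv y = (\<Sum>x\<in>UNIV. \<Sum>z\<in>UNIV. PX x * WY x y * WZ x z)"
    unfolding PY_def PYZ_def by (rule sum.swap)
  also have "\<dots> = (\<Sum>x\<in>UNIV. PX x * WY x y)" by (simp add: sum_distrib_left[symmetric] WZs)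
  finally show ?thesis .
qed

lemma PZ_eq: "PZv z = (\<Sum>x\<in>UNIV. PX x * WZ x z)"
proof -
  have "PZv z = (\<Sum>x\<in>UNIV. \<Sum>y\<in>UNIV. PX x * WY x y * WZ x z)"
    unfolding PZ_def PYZ_def by (rule sum.swap)
  also have "\<dots> = (\<Sum>x\<in>UNIV. PX x * WZ x z)"
    by (simp add: sum_distrib_right[symmetric] sum_distrib_left[symmetric] WYs)
  finally show ?thesis .
qed

lemma PY_pmf: "pmf_on PYv"
  unfolding pmf_on_def PY_eq
  by (auto intro!: sum_nonneg mult_nonneg_nonneg PXn WYn simp: sum.swap[of _ UNIV] sum_distrib_left[symmetric] WYs pmf_on_sum[OF PX])

lemma PZ_pmf: "pmf_on PZv"
  unfolding pmf_on_def PZ_eq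
  by (auto intro!: sum_nonneg mult_nonneg_nonneg PXn WZn simp: sum.swap[of _ UNIV] sum_distrib_left[symmetric] WZs pmf_on_sum[OF PX])

lemma Q_le_PY: "Q y z \<le> PYv y"
  unfolding PY_def by (rule member_le_sum) (auto simp: Q_nonneg)

lemma Q_le_PZ: "Q y z \<le> PZv z"
  unfolding PZ_def by (rule member_le_sum) (auto simp: Q_nonneg)

lemma q_pmf: "pmf_on (\<lambda>(y, z). Q y z)"
proof -
  have "(\<Sum>a\<in>UNIV. (\<lambda>(y, z). Q y z) a) = (\<Sum>y\<in>UNIV. \<Sum>z\<in>UNIV. Q y z)"
    by (simp add: UNIV_Times_UNIV[symmetric] sum.cartesian_product del: UNIV_Times_UNIV)
  also have "\<dots> = 1" using PY_pmf by (simp add: PY_def pmf_on_def)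
  finally show ?thesis by (auto simp: pmf_on_def Q_nonneg)
qed

lemma Qn_nonneg: "0 \<le> Qn n y z"
  unfolding Qn_def dmc_def by (intro prod_nonneg) (auto simp: Q_nonneg)
lemma PYn_nonneg: "0 \<le> PYn n y" unfolding PYn_def by (rule iid_nonneg[OF PY_pmf])
lemma PZn_nonneg: "0 \<le> PZn n z" unfolding PZn_def by (rule iid_nonneg[OF PZ_pmf])
lemma PYn_sum: "(\<Sum>y\<in>seqs n. PYn n y) = 1" unfolding PYn_def by (rule iid_sum[OF PY_pmf])
lemma PZn_sum: "(\<Sum>z\<in>seqs n. PZn n z) = 1" unfolding PZn_def by (rule iid_sum[OF PZ_pmf])

lemma Qn_sum_y: "(\<Sum>y\<in>seqs n. Qn n y z) = PZn n z"
  unfolding Qn_def dmc_def PZn_def iid_def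
  by (subst sum_seqs_prod[of "\<lambda>i a. Q a (z i)"]) (simp add: PZ_def)

lemma Qn_sum: "(\<Sum>y\<in>seqs n. \<Sum>z\<in>seqs n. Qn n y z) = 1"
  by (subst sum.swap) (simp add: Qn_sum_y PZn_sum)

lemma Qn_pos_factors: "Qn n y z > 0 \<Longrightarrow> i < n \<Longrightarrow> Q (y i) (z i) > 0"
proof (rule ccontr)
  assume "Qn n y z > 0" "i < n" "\<not> Q (y i) (z i) > 0"
  then have "Q (y i) (z i) = 0" using Q_nonneg[of "y i" "z i"] by simp
  then have "Qn n y z = 0" using \<open>i < n\<close> unfolding Qn_def dmc_def by (intro prod_zero) auto
  then show False using \<open>Qn n y z > 0\<close> by simp
qed

lemma T_exp:
  assumes "Qn n y z > 0"
  shows "T n y z = exp (\<Sum>i<n. info (y i) (z i))"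
proof -
  have "exp (\<Sum>i<n. info (y i) (z i)) = (\<Prod>i<n. exp (info (y i) (z i)))" by (simp add: exp_sum)
  also have "\<dots> = (\<Prod>i<n. Q (y i) (z i) / (PYv (y i) * PZv (z i)))"
  proof (intro prod.cong refl)
    fix i assume "i \<in> {..<n}"
    then have q: "Q (y i) (z i) > 0" using Qn_pos_factors[OF assms] by auto
    then have "PYv (y i) > 0" "PZv (z i) > 0" using Q_le_PY Q_le_PZ by (auto intro: less_le_trans)
    then show "exp (info (y i) (z i)) = Q (y i) (z i) / (PYv (y i) * PZv (z i))"
      using q unfolding info_dens_def by simp
  qed
  also have "\<dots> = T n y z"
    unfolding T_def Qn_def PYn_def PZn_def dmc_def iid_def by (simp add: prod_dividef prod.distrib)
  finally show ?thesis by simp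
qed

end



context bio begin

lemma tuples_PiE: "tuples M n = PiE {..<M} (\<lambda>_. seqs n)" by (simp add: tuples_def)

lemma finite_tuples[simp]: "finite (tuples M n :: (nat \<Rightarrow> nat \<Rightarrow> 'a::finite) set)"
  unfolding tuples_def by (intro finite_PiE) auto

lemma sum_tuples_prod:
  fixes F :: "nat \<Rightarrow> (nat \<Rightarrow> 'a::finite) \<Rightarrow> real"
  shows "(\<Sum>ys\<in>tuples M n. \<Prod>m<M. F m (ys m)) = (\<Prod>m<M. \<Sum>y\<in>seqs n. F m y)"
  unfolding tuples_def by (subst prod_sum_PiE) auto

lemma prod_if_w:
  fixes w M :: nat and f :: "nat \<Rightarrow> real"
  assumes "w < M"
  shows "(\<Prod>m<M. if m = w then a m else f m) = a w * (\<Prod>m\<in>{..<M} - {w}. f m)"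
proof -
  have "(\<Prod>m<M. if m = w then a m else f m) = (if w = w then a w else f w) * (\<Prod>m\<in>{..<M} - {w}. if m = w then a m else f m)"
    using prod.remove[of "{..<M}" w "\<lambda>m. if m = w then a m else f m"] assms by simp
  also have "(\<Prod>m\<in>{..<M} - {w}. if m = w then a m else f m) = (\<Prod>m\<in>{..<M} - {w}. f m)"
    by (intro prod.cong) auto
  finally show ?thesis by simp
qed

lemma marg_x:
  assumes w: "w < M"
  shows "(\<Sum>xs\<in>tuples M n. (\<Prod>m<M. iid n PX (xs m) * dmc n WY (xs m) (ys m)) * dmc n WZ (xs w) z)
     = (\<Prod>m\<in>{..<M} - {w}. PYn n (ys m)) * Qn n (ys w) z"
proof -
  define F where "F m x = iid n PX x * dmc n WY x (ys m) * (if m = w then dmc n WZ x z else 1)" for m x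
  have 1: "(\<Prod>m<M. iid n PX (xs m) * dmc n WY (xs m) (ys m)) * dmc n WZ (xs w) z = (\<Prod>m<M. F m (xs m))" for xs
  proof -
    have "(\<Prod>m<M. F m (xs m)) = (\<Prod>m<M. iid n PX (xs m) * dmc n WY (xs m) (ys m)) * (\<Prod>m<M. if m = w then dmc n WZ (xs m) z else 1)"
      unfolding F_def by (simp add: prod.distrib)
    also have "(\<Prod>m<M. if m = w then dmc n WZ (xs m) z else 1) = dmc n WZ (xs w) z"
      using w by (simp add: prod.delta)
    finally show ?thesis by simp
  qed
  have 2: "(\<Sum>x\<in>seqs n. F m x) = (if m = w then Qn n (ys w) z else PYn n (ys m))" for m
  proof (cases "m = w")
    case True
    have "(\<Sum>x\<in>seqs n. F m x) = (\<Sum>x\<in>seqs n. \<Prod>i<n. PX (x i) * WY (x i) (ys m i) * WZ (x i) (z i))"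
      unfolding F_def iid_def dmc_def using True by (simp add: prod.distrib)
    also have "\<dots> = (\<Prod>i<n. \<Sum>a\<in>UNIV. PX a * WY a (ys m i) * WZ a (z i))"
      by (rule sum_seqs_prod)
    also have "\<dots> = Qn n (ys w) z" unfolding Qn_def dmc_def PYZ_def using True by simp
    finally show ?thesis using True by simp
  next
    case False
    have "(\<Sum>x\<in>seqs n. F m x) = (\<Sum>x\<in>seqs n. \<Prod>i<n. PX (x i) * WY (x i) (ys m i))"
      unfolding F_def iid_def dmc_def using False by (simp add: prod.distrib)
    also have "\<dots> = (\<Prod>i<n. \<Sum>a\<in>UNIV. PX a * WY a (ys m i))"
      by (rule sum_seqs_prod)
    also have "\<dots> = PYn n (ys m)" unfolding PYn_def iid_def by (simp add: PY_eq)
    finally show ?thesis using False by simp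
  qed
  have "(\<Sum>xs\<in>tuples M n. (\<Prod>m<M. iid n PX (xs m) * dmc n WY (xs m) (ys m)) * dmc n WZ (xs w) z)
      = (\<Sum>xs\<in>tuples M n. \<Prod>m<M. F m (xs m))" by (simp add: 1)
  also have "\<dots> = (\<Prod>m<M. \<Sum>x\<in>seqs n. F m x)" by (rule sum_tuples_prod)
  also have "\<dots> = (\<Prod>m<M. if m = w then Qn n (ys w) z else PYn n (ys m))" by (simp add: 2)
  also have "\<dots> = Qn n (ys w) z * (\<Prod>m\<in>{..<M} - {w}. PYn n (ys m))"
    using prod_if_w[OF w, of "\<lambda>m. Qn n (ys w) z" "\<lambda>m. PYn n (ys m)"] by simp
  finally show ?thesis by simp
qed

definition ind :: "bool \<Rightarrow> real" where "ind b = (if b then 1 else 0)"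

lemma pc_formula:
  "prob_correct PX WY WZ n M g = (\<Sum>w<M. (1 / real M) *
     (\<Sum>ys\<in>tuples M n. \<Sum>z\<in>seqs n. (\<Prod>m\<in>{..<M} - {w}. PYn n (ys m)) * Qn n (ys w) z * ind (g ys z = w)))"
  unfolding prob_correct_def
proof (intro sum.cong refl arg_cong2[where f = "(*)"])
  fix w assume w: "w \<in> {..<M}"
  have "(\<Sum>xs\<in>tuples M n. \<Sum>ys\<in>tuples M n. \<Sum>z\<in>seqs n.
           (\<Prod>m<M. iid n PX (xs m) * dmc n WY (xs m) (ys m)) * dmc n WZ (xs w) z * (if g ys z = w then 1 else 0))
      = (\<Sum>ys\<in>tuples M n. \<Sum>z\<in>seqs n. \<Sum>xs\<in>tuples M n.
           (\<Prod>m<M. iid n PX (xs m) * dmc n WY (xs m) (ys m)) * dmc n WZ (xs w) z * (if g ys z = w then 1 else 0))"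
    by (subst sum.swap) (simp add: sum.swap[of _ "tuples M n" "seqs n"])
  also have "\<dots> = (\<Sum>ys\<in>tuples M n. \<Sum>z\<in>seqs n. (\<Prod>m\<in>{..<M} - {w}. PYn n (ys m)) * Qn n (ys w) z * ind (g ys z = w))"
  proof (intro sum.cong refl)
    fix ys z
    show "(\<Sum>xs\<in>tuples M n. (\<Prod>m<M. iid n PX (xs m) * dmc n WY (xs m) (ys m)) * dmc n WZ (xs w) z * (if g ys z = w then 1 else 0))
        = (\<Prod>m\<in>{..<M} - {w}. PYn n (ys m)) * Qn n (ys w) z * ind (g ys z = w)"
      using marg_x[of w M n ys z] w by (simp add: ind_def sum_distrib_right[symmetric])
  qed
  finally show "(\<Sum>xs\<in>tuples M n. \<Sum>ys\<in>tuples M n. \<Sum>z\<in>seqs n.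
           (\<Prod>m<M. iid n PX (xs m) * dmc n WY (xs m) (ys m)) * dmc n WZ (xs w) z * (if g ys z = w then 1 else 0))
      = (\<Sum>ys\<in>tuples M n. \<Sum>z\<in>seqs n. (\<Prod>m\<in>{..<M} - {w}. PYn n (ys m)) * Qn n (ys w) z * ind (g ys z = w))" .
qed

lemma sum_B1:
  assumes w: "w < M"
  shows "(\<Sum>ys\<in>tuples M n. (\<Prod>m\<in>{..<M} - {w}. PYn n (ys m)) * H (ys w)) = (\<Sum>y\<in>seqs n. H y)"
proof -
  have "(\<Sum>ys\<in>tuples M n. (\<Prod>m\<in>{..<M} - {w}. PYn n (ys m)) * H (ys w))
      = (\<Sum>ys\<in>tuples M n. \<Prod>m<M. (if m = w then H (ys m) else PYn n (ys m)))"
    using prod_if_w[OF w, of "\<lambda>m. H (ys m)" "\<lambda>m. PYn n (ys m)" for ys] by (simp add: mult.commute)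
  also have "\<dots> = (\<Prod>m<M. \<Sum>y\<in>seqs n. (if m = w then H y else PYn n y))"
    by (rule sum_tuples_prod[where F = "\<lambda>m y. if m = w then H y else PYn n y"])
  also have "\<dots> = (\<Prod>m<M. if m = w then (\<Sum>y\<in>seqs n. H y) else 1)"
    by (intro prod.cong) (auto simp: PYn_sum)
  also have "\<dots> = (\<Sum>y\<in>seqs n. H y)" using w by simp
  finally show ?thesis .
qed

lemma sum_B2:
  assumes w: "w < M" and k: "k < M" "k \<noteq> w"
  shows "(\<Sum>ys\<in>tuples M n. (\<Prod>m\<in>{..<M} - {w}. PYn n (ys m)) * H (ys w) * G (ys k))
       = (\<Sum>y\<in>seqs n. H y) * (\<Sum>y\<in>seqs n. PYn n y * G y)"
proof -
  define F where "F m y = (if m = w then H y else if m = k then PYn n y * G y else PYn n y)" for m y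
  have "(\<Prod>m<M. F m (ys m)) = (\<Prod>m\<in>{..<M} - {w}. PYn n (ys m)) * H (ys w) * G (ys k)" for ys
  proof -
    have "(\<Prod>m<M. F m (ys m)) = H (ys w) * (\<Prod>m\<in>{..<M} - {w}. if m = k then PYn n (ys m) * G (ys m) else PYn n (ys m))"
      unfolding F_def using prod_if_w[OF w, of "\<lambda>m. H (ys m)"] by simp
    also have "(\<Prod>m\<in>{..<M} - {w}. if m = k then PYn n (ys m) * G (ys m) else PYn n (ys m))
        = (\<Prod>m\<in>{..<M} - {w}. PYn n (ys m) * (if m = k then G (ys m) else 1))"
      by (intro prod.cong) auto
    also have "\<dots> = (\<Prod>m\<in>{..<M} - {w}. PYn n (ys m)) * G (ys k)"
      using k w by (simp add: prod.distrib prod.delta)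
    finally show ?thesis by (simp add: mult_ac)
  qed
  then have "(\<Sum>ys\<in>tuples M n. (\<Prod>m\<in>{..<M} - {w}. PYn n (ys m)) * H (ys w) * G (ys k))
      = (\<Sum>ys\<in>tuples M n. \<Prod>m<M. F m (ys m))" by simp
  also have "\<dots> = (\<Prod>m<M. \<Sum>y\<in>seqs n. F m y)" by (rule sum_tuples_prod)
  also have "\<dots> = (\<Prod>m<M. if m = w then (\<Sum>y\<in>seqs n. H y) else (if m = k then (\<Sum>y\<in>seqs n. PYn n y * G y) else 1))"
    by (intro prod.cong) (auto simp: F_def PYn_sum)
  also have "\<dots> = (\<Sum>y\<in>seqs n. H y) * (\<Prod>m\<in>{..<M} - {w}. if m = k then (\<Sum>y\<in>seqs n. PYn n y * G y) else 1)"
    using prod_if_w[OF w, of "\<lambda>m. \<Sum>y\<in>seqs n. H y" "\<lambda>m. if m = k then (\<Sum>y\<in>seqs n. PYn n y * G y) else 1"] by simp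
  also have "(\<Prod>m\<in>{..<M} - {w}. if m = k then (\<Sum>y\<in>seqs n. PYn n y * G y) else 1) = (\<Sum>y\<in>seqs n. PYn n y * G y)"
    using k w by (simp add: prod.delta)
  finally show ?thesis .
qed

lemma sum_all_PY: "(\<Sum>ys\<in>tuples M n. \<Prod>m<M. PYn n (ys m)) = 1"
  by (subst sum_tuples_prod) (simp add: PYn_sum)

end



context bio begin

lemma ind_nonneg: "0 \<le> ind b" by (simp add: ind_def)
lemma ind_le1: "ind b \<le> 1" by (simp add: ind_def)

lemma sum_ind_le1: fixes a M :: nat shows "(\<Sum>w<M. ind (a = w)) \<le> 1"
proof -
  have "(\<Sum>w<M. ind (a = w)) = (\<Sum>w<M. if a = w then 1 else 0)" by (simp add: ind_def)
  also have "\<dots> = (if a \<in> {..<M} then 1 else 0)" by (simp add: sum.delta)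
  finally show ?thesis by simp
qed

lemma prod_w_all:
  fixes w M :: nat
  assumes "w < M"
  shows "(\<Prod>m\<in>{..<M} - {w}. PYn n (ys m)) * PYn n (ys w) = (\<Prod>m<M. PYn n (ys m))"
  using prod.remove[of "{..<M}" w "\<lambda>m. PYn n (ys m)"] assms by (simp add: mult.commute)

lemma prod_w_nonneg: "0 \<le> (\<Prod>m\<in>A. PYn n (ys m))"
  by (intro prod_nonneg) (auto simp: PYn_nonneg)

lemma pw_conv: "Qn n y z \<le> exp \<gamma> * PYn n y * PZn n z + Qn n y z * ind (exp \<gamma> < T n y z)"
proof (cases "Qn n y z > 0")
  case False
  then have "Qn n y z = 0" using Qn_nonneg[of n y z] by simp
  then show ?thesis using PYn_nonneg[of n y] PZn_nonneg[of n z] by simp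
next
  case True
  have py: "PYn n y > 0"
  proof -
    have "\<forall>i<n. PYv (y i) > 0" using Qn_pos_factors[OF True] Q_le_PY by (auto intro: less_le_trans)
    then show ?thesis unfolding PYn_def iid_def by (intro prod_pos) auto
  qed
  have pz: "PZn n z > 0"
  proof -
    have "\<forall>i<n. PZv (z i) > 0" using Qn_pos_factors[OF True] Q_le_PZ by (auto intro: less_le_trans)
    then show ?thesis unfolding PZn_def iid_def by (intro prod_pos) auto
  qed
  show ?thesis
  proof (cases "exp \<gamma> < T n y z")
    case True
    then show ?thesis using py pz by (simp add: ind_def)
  next
    case False
    then have "Qn n y z / (PYn n y * PZn n z) \<le> exp \<gamma>" by (simp add: T_def)
    then have "Qn n y z \<le> exp \<gamma> * (PYn n y * PZn n z)" using py pz by (simp add: divide_le_eq)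
    then show ?thesis using False by (simp add: ind_def mult.assoc)
  qed
qed

definition PT :: "nat \<Rightarrow> real \<Rightarrow> real" where
  "PT n thr = (\<Sum>y\<in>seqs n. \<Sum>z\<in>seqs n. Qn n y z * ind (thr < T n y z))"

lemma PT_nonneg: "0 \<le> PT n thr"
  unfolding PT_def by (intro sum_nonneg mult_nonneg_nonneg Qn_nonneg ind_nonneg)

lemma partB:
  assumes M: "M \<ge> 1"
  shows "(\<Sum>w<M. (1 / real M) * (\<Sum>ys\<in>tuples M n. \<Sum>z\<in>seqs n.
      (\<Prod>m\<in>{..<M} - {w}. PYn n (ys m)) * (Qn n (ys w) z * ind (thr < T n (ys w) z)))) = PT n thr"
proof -
  have "(\<Sum>ys\<in>tuples M n. \<Sum>z\<in>seqs n. (\<Prod>m\<in>{..<M} - {w}. PYn n (ys m)) * (Qn n (ys w) z * ind (thr < T n (ys w) z)))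
      = PT n thr" if w: "w < M" for w
  proof -
    have "(\<Sum>ys\<in>tuples M n. \<Sum>z\<in>seqs n. (\<Prod>m\<in>{..<M} - {w}. PYn n (ys m)) * (Qn n (ys w) z * ind (thr < T n (ys w) z)))
        = (\<Sum>ys\<in>tuples M n. (\<Prod>m\<in>{..<M} - {w}. PYn n (ys m)) * (\<Sum>z\<in>seqs n. Qn n (ys w) z * ind (thr < T n (ys w) z)))"
      by (simp add: sum_distrib_left)
    also have "\<dots> = PT n thr" unfolding PT_def by (rule sum_B1[OF w])
    finally show ?thesis .
  qed
  then have "(\<Sum>w<M. (1 / real M) * (\<Sum>ys\<in>tuples M n. \<Sum>z\<in>seqs n.
      (\<Prod>m\<in>{..<M} - {w}. PYn n (ys m)) * (Qn n (ys w) z * ind (thr < T n (ys w) z)))) = (\<Sum>w<M. (1 / real M) * PT n thr)"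
    by (intro sum.cong) auto
  also have "\<dots> = PT n thr" using M by simp
  finally show ?thesis .
qed

lemma converse:
  assumes M: "M \<ge> 1"
  shows "prob_correct PX WY WZ n M g \<le> exp \<gamma> / real M + PT n (exp \<gamma>)"
proof -
  let ?P = "\<lambda>w ys. (\<Prod>m\<in>{..<M} - {w}. PYn n (ys m))"
  let ?A = "\<lambda>w ys z. exp \<gamma> * ((\<Prod>m<M. PYn n (ys m)) * PZn n z * ind (g ys z = w))"
  let ?B = "\<lambda>w ys z. ?P w ys * (Qn n (ys w) z * ind (exp \<gamma> < T n (ys w) z))"
  have "prob_correct PX WY WZ n M g \<le> (\<Sum>w<M. (1 / real M) * (\<Sum>ys\<in>tuples M n. \<Sum>z\<in>seqs n. ?A w ys z + ?B w ys z))"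
    unfolding pc_formula
  proof (intro sum_mono mult_left_mono)
    fix w ys z assume w: "w \<in> {..<M}"
    have "?P w ys * Qn n (ys w) z * ind (g ys z = w) \<le> ?P w ys * Qn n (ys w) z"
      by (rule mult_left_le[OF ind_le1]) (intro mult_nonneg_nonneg prod_w_nonneg Qn_nonneg)
    also have "\<dots> \<le> ?P w ys * (exp \<gamma> * PYn n (ys w) * PZn n z + Qn n (ys w) z * ind (exp \<gamma> < T n (ys w) z))"
      by (intro mult_left_mono pw_conv prod_w_nonneg)
    also have "\<dots> = exp \<gamma> * ((\<Prod>m<M. PYn n (ys m)) * PZn n z) + ?B w ys z"
      using prod_w_all[of w M n ys] w by (simp add: algebra_simps)
    finally have 1: "?P w ys * Qn n (ys w) z * ind (g ys z = w) \<le> exp \<gamma> * ((\<Prod>m<M. PYn n (ys m)) * PZn n z) + ?B w ys z" .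
    show "?P w ys * Qn n (ys w) z * ind (g ys z = w) \<le> ?A w ys z + ?B w ys z"
    proof (cases "g ys z = w")
      case True then show ?thesis using 1 by (simp add: ind_def)
    next
      case False
      then have "?P w ys * Qn n (ys w) z * ind (g ys z = w) = 0" by (simp add: ind_def)
      moreover have "0 \<le> ?B w ys z" by (intro mult_nonneg_nonneg prod_w_nonneg Qn_nonneg ind_nonneg)
      ultimately show ?thesis using False by (simp add: ind_def)
    qed
  qed simp
  also have "\<dots> = (\<Sum>w<M. (1 / real M) * (\<Sum>ys\<in>tuples M n. \<Sum>z\<in>seqs n. ?A w ys z))
                  + (\<Sum>w<M. (1 / real M) * (\<Sum>ys\<in>tuples M n. \<Sum>z\<in>seqs n. ?B w ys z))"
    by (simp add: sum.distrib distrib_left)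
  also have "(\<Sum>w<M. (1 / real M) * (\<Sum>ys\<in>tuples M n. \<Sum>z\<in>seqs n. ?B w ys z)) = PT n (exp \<gamma>)"
    by (rule partB[OF M])
  also have "(\<Sum>w<M. (1 / real M) * (\<Sum>ys\<in>tuples M n. \<Sum>z\<in>seqs n. ?A w ys z)) \<le> exp \<gamma> / real M"
  proof -
    have "(\<Sum>w<M. (1 / real M) * (\<Sum>ys\<in>tuples M n. \<Sum>z\<in>seqs n. ?A w ys z))
        = (exp \<gamma> / real M) * (\<Sum>ys\<in>tuples M n. \<Sum>z\<in>seqs n. (\<Prod>m<M. PYn n (ys m)) * PZn n z * (\<Sum>w<M. ind (g ys z = w)))"
      by (simp add: sum_distrib_left sum_distrib_right sum.swap[of _ "{..<M}"] mult_ac)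
    also have "\<dots> \<le> (exp \<gamma> / real M) * (\<Sum>ys\<in>tuples M n. \<Sum>z\<in>seqs n. (\<Prod>m<M. PYn n (ys m)) * PZn n z)"
      by (intro mult_left_mono sum_mono mult_nonneg_nonneg)
        (auto intro!: mult_left_le sum_ind_le1 mult_nonneg_nonneg prod_nonneg PYn_nonneg PZn_nonneg)
    also have "(\<Sum>ys\<in>tuples M n. \<Sum>z\<in>seqs n. (\<Prod>m<M. PYn n (ys m)) * PZn n z) = 1"
      by (simp add: sum_distrib_left[symmetric] PZn_sum sum_all_PY)
    finally show ?thesis by simp
  qed
  finally show ?thesis by simp
qed

end



context bio begin

definition dec :: "nat \<Rightarrow> real \<Rightarrow> (nat \<Rightarrow> nat \<Rightarrow> 'y) \<Rightarrow> (nat \<Rightarrow> 'z) \<Rightarrow> nat" where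
  "dec n thr ys z = (LEAST w. thr < T n (ys w) z)"

lemma dec_ind:
  fixes w M :: nat
  assumes w: "w < M"
  shows "ind (thr < T n (ys w) z) - (\<Sum>k\<in>{..<M} - {w}. ind (thr < T n (ys k) z)) \<le> ind (dec n thr ys z = w)"
proof (cases "thr < T n (ys w) z \<and> (\<forall>k\<in>{..<M} - {w}. \<not> thr < T n (ys k) z)")
  case True
  have "dec n thr ys z = w"
    unfolding dec_def
  proof (rule Least_equality)
    show "thr < T n (ys w) z" using True by simp
    fix k assume k: "thr < T n (ys k) z"
    show "w \<le> k"
    proof (rule ccontr)
      assume "\<not> w \<le> k"
      then have "k \<in> {..<M} - {w}" using w by auto
      then show False using True k by blast
    qed
  qed
  then show ?thesis using True by (simp add: ind_def)
next
  case False
  have s0: "0 \<le> (\<Sum>k\<in>{..<M} - {w}. ind (thr < T n (ys k) z))" by (intro sum_nonneg ind_nonneg)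
  show ?thesis
  proof (cases "thr < T n (ys w) z")
    case True
    with False obtain k where k: "k \<in> {..<M} - {w}" "thr < T n (ys k) z" by blast
    have "ind (thr < T n (ys k) z) \<le> (\<Sum>k\<in>{..<M} - {w}. ind (thr < T n (ys k) z))"
      using k by (intro member_le_sum ind_nonneg) auto
    then have "1 \<le> (\<Sum>k\<in>{..<M} - {w}. ind (thr < T n (ys k) z))" using k by (simp add: ind_def)
    then show ?thesis using True ind_nonneg[of "dec n thr ys z = w"] by (simp add: ind_def)
  next
    case False
    then show ?thesis using s0 ind_nonneg[of "dec n thr ys z = w"] by (simp add: ind_def)
  qed
qed

lemma cross_bound:
  assumes thr: "thr > 0"
  shows "(\<Sum>z\<in>seqs n. PZn n z * (\<Sum>y\<in>seqs n. PYn n y * ind (thr < T n y z))) \<le> 1 / thr"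
proof -
  have "(\<Sum>z\<in>seqs n. PZn n z * (\<Sum>y\<in>seqs n. PYn n y * ind (thr < T n y z)))
      = (\<Sum>z\<in>seqs n. \<Sum>y\<in>seqs n. PYn n y * PZn n z * ind (thr < T n y z))"
    by (simp add: sum_distrib_left mult_ac)
  also have "\<dots> \<le> (\<Sum>z\<in>seqs n. \<Sum>y\<in>seqs n. Qn n y z / thr)"
  proof (intro sum_mono)
    fix z y
    show "PYn n y * PZn n z * ind (thr < T n y z) \<le> Qn n y z / thr"
    proof (cases "thr < T n y z")
      case True
      then have "T n y z \<noteq> 0" using thr by simp
      then have pos: "PYn n y * PZn n z > 0"
        using PYn_nonneg[of n y] PZn_nonneg[of n z] unfolding T_def
        by (metis div_by_0 less_eq_real_def mult_nonneg_nonneg)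
      have "thr * (PYn n y * PZn n z) < T n y z * (PYn n y * PZn n z)"
        using True pos by (rule mult_strict_right_mono)
      also have "\<dots> = Qn n y z" using pos unfolding T_def by (metis nonzero_eq_divide_eq order_less_irrefl)
      finally show ?thesis using True thr by (simp add: ind_def field_simps)
    next
      case False then show ?thesis using Qn_nonneg[of n y z] thr by (simp add: ind_def)
    qed
  qed
  also have "\<dots> = 1 / thr"
    by (simp add: sum_divide_distrib[symmetric] sum.swap[of _ "seqs n" "seqs n"] Qn_sum)
  finally show ?thesis .
qed

lemma achievability:
  assumes M: "M \<ge> 1" and thr: "thr > 0"
  shows "PT n thr - real M / thr \<le> prob_correct PX WY WZ n M (dec n thr)"
proof -
  let ?P = "\<lambda>w ys. (\<Prod>m\<in>{..<M} - {w}. PYn n (ys m))"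
  let ?I = "\<lambda>ys k z. ind (thr < T n (ys k) z)"
  define E where "E = (\<Sum>z\<in>seqs n. PZn n z * (\<Sum>y\<in>seqs n. PYn n y * ind (thr < T n y z)))"
  have E0: "0 \<le> E" unfolding E_def by (intro sum_nonneg mult_nonneg_nonneg PZn_nonneg PYn_nonneg ind_nonneg)
  have E1: "E \<le> 1 / thr" unfolding E_def by (rule cross_bound[OF thr])
  have cross: "(\<Sum>ys\<in>tuples M n. \<Sum>z\<in>seqs n. ?P w ys * Qn n (ys w) z * ?I ys k z) = E"
    if w: "w < M" and k: "k \<in> {..<M} - {w}" for w k
  proof -
    have "(\<Sum>ys\<in>tuples M n. \<Sum>z\<in>seqs n. ?P w ys * Qn n (ys w) z * ?I ys k z)
        = (\<Sum>z\<in>seqs n. \<Sum>ys\<in>tuples M n. ?P w ys * Qn n (ys w) z * ind (thr < T n (ys k) z))"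
      by (rule sum.swap)
    also have "\<dots> = (\<Sum>z\<in>seqs n. (\<Sum>y\<in>seqs n. Qn n y z) * (\<Sum>y\<in>seqs n. PYn n y * ind (thr < T n y z)))"
      using k w by (intro sum.cong refl sum_B2[of w M k n "\<lambda>y. Qn n y z" "\<lambda>y. ind (thr < T n y z)" for z]) auto
    also have "\<dots> = E" unfolding E_def by (simp add: Qn_sum_y)
    finally show ?thesis .
  qed
  have main: "(\<Sum>ys\<in>tuples M n. \<Sum>z\<in>seqs n. ?P w ys * Qn n (ys w) z * ind (dec n thr ys z = w))
      \<ge> PT n thr - (real M - 1) * E" if w: "w < M" for w
  proof -
    have "(\<Sum>ys\<in>tuples M n. \<Sum>z\<in>seqs n. ?P w ys * Qn n (ys w) z * ind (dec n thr ys z = w))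
        \<ge> (\<Sum>ys\<in>tuples M n. \<Sum>z\<in>seqs n. ?P w ys * Qn n (ys w) z * (?I ys w z - (\<Sum>k\<in>{..<M} - {w}. ?I ys k z)))"
      by (intro sum_mono mult_left_mono dec_ind[OF w] mult_nonneg_nonneg prod_w_nonneg Qn_nonneg)
    also have "(\<Sum>ys\<in>tuples M n. \<Sum>z\<in>seqs n. ?P w ys * Qn n (ys w) z * (?I ys w z - (\<Sum>k\<in>{..<M} - {w}. ?I ys k z)))
        = (\<Sum>ys\<in>tuples M n. \<Sum>z\<in>seqs n. ?P w ys * (Qn n (ys w) z * ?I ys w z))
          - (\<Sum>k\<in>{..<M} - {w}. \<Sum>ys\<in>tuples M n. \<Sum>z\<in>seqs n. ?P w ys * Qn n (ys w) z * ?I ys k z)"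
    proof -
      have "(\<Sum>ys\<in>tuples M n. \<Sum>z\<in>seqs n. ?P w ys * Qn n (ys w) z * (?I ys w z - (\<Sum>k\<in>{..<M} - {w}. ?I ys k z)))
          = (\<Sum>ys\<in>tuples M n. \<Sum>z\<in>seqs n. ?P w ys * (Qn n (ys w) z * ?I ys w z) - (\<Sum>k\<in>{..<M} - {w}. ?P w ys * Qn n (ys w) z * ?I ys k z))"
        by (intro sum.cong refl) (simp add: right_diff_distrib sum_distrib_left mult.assoc)
      also have "\<dots> = (\<Sum>ys\<in>tuples M n. \<Sum>z\<in>seqs n. ?P w ys * (Qn n (ys w) z * ?I ys w z))
          - (\<Sum>ys\<in>tuples M n. \<Sum>z\<in>seqs n. \<Sum>k\<in>{..<M} - {w}. ?P w ys * Qn n (ys w) z * ?I ys k z)"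
        by (simp only: sum_subtractf)
      also have "(\<Sum>ys\<in>tuples M n. \<Sum>z\<in>seqs n. \<Sum>k\<in>{..<M} - {w}. ?P w ys * Qn n (ys w) z * ?I ys k z)
          = (\<Sum>ys\<in>tuples M n. \<Sum>k\<in>{..<M} - {w}. \<Sum>z\<in>seqs n. ?P w ys * Qn n (ys w) z * ?I ys k z)"
        by (intro sum.cong refl sum.swap)
      also have "\<dots> = (\<Sum>k\<in>{..<M} - {w}. \<Sum>ys\<in>tuples M n. \<Sum>z\<in>seqs n. ?P w ys * Qn n (ys w) z * ?I ys k z)"
        by (rule sum.swap)
      finally show ?thesis .
    qed
    also have "(\<Sum>ys\<in>tuples M n. \<Sum>z\<in>seqs n. ?P w ys * (Qn n (ys w) z * ?I ys w z)) = PT n thr"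
    proof -
      have "(\<Sum>ys\<in>tuples M n. \<Sum>z\<in>seqs n. ?P w ys * (Qn n (ys w) z * ?I ys w z))
          = (\<Sum>ys\<in>tuples M n. ?P w ys * (\<Sum>z\<in>seqs n. Qn n (ys w) z * ind (thr < T n (ys w) z)))"
        by (simp add: sum_distrib_left)
      also have "\<dots> = PT n thr" unfolding PT_def by (rule sum_B1[OF w])
      finally show ?thesis .
    qed
    also have "(\<Sum>k\<in>{..<M} - {w}. \<Sum>ys\<in>tuples M n. \<Sum>z\<in>seqs n. ?P w ys * Qn n (ys w) z * ?I ys k z)
        = (\<Sum>k\<in>{..<M} - {w}. E)" using cross[OF w] by (intro sum.cong) auto
    also have "\<dots> = (real M - 1) * E" using w by (simp add: card_Diff_subset of_nat_diff)
    finally show ?thesis by simp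
  qed
  have "PT n thr - real M / thr \<le> PT n thr - (real M - 1) * E"
  proof -
    have "(real M - 1) * E \<le> real M * (1 / thr)"
      using M E0 E1 by (intro mult_mono) auto
    then show ?thesis by simp
  qed
  also have "PT n thr - (real M - 1) * E = (\<Sum>w<M. (1 / real M) * (PT n thr - (real M - 1) * E))"
    using M by simp
  also have "\<dots> \<le> prob_correct PX WY WZ n M (dec n thr)"
    unfolding pc_formula by (intro sum_mono mult_left_mono main) auto
  finally show ?thesis .
qed

end



lemma pair_conv:
  fixes Q :: "'y::finite \<Rightarrow> 'z::finite \<Rightarrow> real" and h :: "'y \<Rightarrow> 'z \<Rightarrow> real" and \<phi> :: "real \<Rightarrow> real"
  shows "(\<Sum>y\<in>seqs n. \<Sum>z\<in>seqs n. dmc n Q y z * \<phi> (\<Sum>i<n. h (y i) (z i)))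
       = (\<Sum>x\<in>seqs n. iid n (\<lambda>(y, z). Q y z) x * \<phi> (\<Sum>i<n. (\<lambda>(y, z). h y z) (x i)))"
proof -
  have "(\<Sum>y\<in>seqs n. \<Sum>z\<in>seqs n. dmc n Q y z * \<phi> (\<Sum>i<n. h (y i) (z i)))
      = (\<Sum>(y, z)\<in>seqs n \<times> seqs n. dmc n Q y z * \<phi> (\<Sum>i<n. h (y i) (z i)))"
    by (rule sum.cartesian_product)
  also have "\<dots> = (\<Sum>x\<in>seqs n. iid n (\<lambda>(y, z). Q y z) x * \<phi> (\<Sum>i<n. (\<lambda>(y, z). h y z) (x i)))"
  proof (rule sum.reindex_bij_witness[where j = "\<lambda>(y, z). restrict (\<lambda>k. (y k, z k)) {..<n}"
        and i = "\<lambda>x. (restrict (\<lambda>k. fst (x k)) {..<n}, restrict (\<lambda>k. snd (x k)) {..<n})"])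
    fix a :: "(nat \<Rightarrow> 'y) \<times> (nat \<Rightarrow> 'z)" assume a: "a \<in> seqs n \<times> seqs n"
    obtain y z where yz: "a = (y, z)" by (cases a)
    have y: "y \<in> {..<n} \<rightarrow>\<^sub>E UNIV" and z: "z \<in> {..<n} \<rightarrow>\<^sub>E UNIV" using a yz by (auto simp: seqs_def)
    show "(\<lambda>x. (restrict (\<lambda>k. fst (x k)) {..<n}, restrict (\<lambda>k. snd (x k)) {..<n}))
           ((\<lambda>(y, z). restrict (\<lambda>k. (y k, z k)) {..<n}) a) = a"
      using y z yz by (auto simp: fun_eq_iff PiE_def extensional_def restrict_def)
    show "(\<lambda>(y, z). restrict (\<lambda>k. (y k, z k)) {..<n}) a \<in> seqs n"
      using yz by (simp add: seqs_def)
    show "iid n (\<lambda>(y, z). Q y z) ((\<lambda>(y, z). restrict (\<lambda>k. (y k, z k)) {..<n}) a)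
           * \<phi> (\<Sum>i<n. (\<lambda>(y, z). h y z) ((\<lambda>(y, z). restrict (\<lambda>k. (y k, z k)) {..<n}) a i))
         = (case a of (y, z) \<Rightarrow> dmc n Q y z * \<phi> (\<Sum>i<n. h (y i) (z i)))"
      using yz by (simp add: iid_def dmc_def)
  next
    fix b :: "nat \<Rightarrow> 'y \<times> 'z" assume b: "b \<in> seqs n"
    then have bE: "b \<in> {..<n} \<rightarrow>\<^sub>E UNIV" by (simp add: seqs_def)
    show "(\<lambda>(y, z). restrict (\<lambda>k. (y k, z k)) {..<n})
          ((\<lambda>x. (restrict (\<lambda>k. fst (x k)) {..<n}, restrict (\<lambda>k. snd (x k)) {..<n})) b) = b"
      using bE by (auto simp: fun_eq_iff PiE_def extensional_def restrict_def)
    show "(\<lambda>x. (restrict (\<lambda>k. fst (x k)) {..<n}, restrict (\<lambda>k. snd (x k)) {..<n})) b \<in> seqs n \<times> seqs n"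
      by (simp add: seqs_def)
  qed
  finally show ?thesis .
qed

context bio begin

abbreviation "Cb \<equiv> C_bio PX WY WZ"
abbreviation "Vb \<equiv> V_bio PX WY WZ"
definition qq :: "'y \<times> 'z \<Rightarrow> real" where "qq = (\<lambda>(y, z). Q y z)"
definition gc :: "'y \<times> 'z \<Rightarrow> real" where "gc = (\<lambda>(y, z). info y z - Cb)"

lemma T_ind: "Qn n y z * ind (exp t < T n y z) = Qn n y z * ind (t < (\<Sum>i<n. info (y i) (z i)))"
proof (cases "Qn n y z > 0")
  case True then show ?thesis by (simp add: T_exp)
next
  case False then have "Qn n y z = 0" using Qn_nonneg[of n y z] by simp
  then show ?thesis by simp
qed

lemma PT_Pr: "PT n (exp t) = Pr qq gc n (\<lambda>s. t - real n * Cb < s)"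
proof -
  have "PT n (exp t) = (\<Sum>y\<in>seqs n. \<Sum>z\<in>seqs n. Qn n y z * ind (t < (\<Sum>i<n. info (y i) (z i))))"
    unfolding PT_def by (simp add: T_ind)
  also have "\<dots> = (\<Sum>x\<in>seqs n. iid n qq x * ind (t < (\<Sum>i<n. (\<lambda>(y, z). info y z) (x i))))"
    unfolding Qn_def qq_def by (rule pair_conv[where \<phi> = "\<lambda>s. ind (t < s)"])
  also have "\<dots> = Pr qq gc n (\<lambda>s. t - real n * Cb < s)"
    unfolding Pr_def
  proof (intro sum.cong refl)
    fix x :: "nat \<Rightarrow> 'y \<times> 'z"
    have "(\<Sum>i<n. gc (x i)) = (\<Sum>i<n. (\<lambda>(y, z). info y z) (x i)) - real n * Cb"
      unfolding gc_def by (simp add: case_prod_beta sum_subtractf)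
    then show "iid n qq x * ind (t < (\<Sum>i<n. (\<lambda>(y, z). info y z) (x i)))
        = iid n qq x * (if t - real n * Cb < (\<Sum>i<n. gc (x i)) then 1 else 0)"
      by (simp add: ind_def)
  qed
  finally show ?thesis .
qed

lemma qq_pmf: "pmf_on qq" unfolding qq_def by (rule q_pmf)

lemma sum_supp:
  fixes f :: "'y \<Rightarrow> 'z \<Rightarrow> real"
  shows "(\<Sum>(y, z)\<in>{(y, z). Q y z > 0}. Q y z * f y z) = (\<Sum>a\<in>UNIV. qq a * (\<lambda>(y, z). f y z) a)"
proof -
  have "(\<Sum>a\<in>UNIV. qq a * (\<lambda>(y, z). f y z) a) = (\<Sum>a\<in>{(y, z). Q y z > 0}. qq a * (\<lambda>(y, z). f y z) a)"
  proof (rule sum.mono_neutral_right)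
    show "\<forall>a\<in>UNIV - {(y, z). Q y z > 0}. qq a * (\<lambda>(y, z). f y z) a = 0"
    proof
      fix a assume "a \<in> UNIV - {(y, z). Q y z > 0}"
      then have "qq a = 0" using Q_nonneg by (cases a) (auto simp: qq_def less_le)
      then show "qq a * (\<lambda>(y, z). f y z) a = 0" by simp
    qed
  qed auto
  then show ?thesis by (simp add: qq_def case_prod_beta)
qed

lemma md_inst:
  assumes "Vb > 0"
  shows "mdset qq gc Vb (\<Sum>a\<in>UNIV. \<bar>gc a\<bar>)"
proof
  show "pmf_on qq" by (rule qq_pmf)
  have qs: "(\<Sum>a\<in>UNIV. qq a) = 1" using qq_pmf by (simp add: pmf_on_def)
  have "(\<Sum>a\<in>UNIV. qq a * gc a) = (\<Sum>a\<in>UNIV. qq a * (\<lambda>(y, z). info y z) a) - Cb * (\<Sum>a\<in>UNIV. qq a)"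
    unfolding gc_def by (simp add: case_prod_beta algebra_simps sum_subtractf sum_distrib_left)
  also have "(\<Sum>a\<in>UNIV. qq a * (\<lambda>(y, z). info y z) a) = Cb"
    unfolding C_bio_def using sum_supp[of info] by simp
  finally show "(\<Sum>a\<in>UNIV. qq a * gc a) = 0" using qs by simp
  show "Vb = (\<Sum>a\<in>UNIV. qq a * (gc a)\<^sup>2)"
    unfolding V_bio_def using sum_supp[of "\<lambda>y z. (info y z - Cb)\<^sup>2"]
    by (simp add: gc_def case_prod_beta)
  show "Vb > 0" by (rule assms)
  show "\<bar>gc a\<bar> \<le> (\<Sum>a\<in>UNIV. \<bar>gc a\<bar>)" for a by (rule member_le_sum) auto
  show "0 \<le> (\<Sum>a\<in>UNIV. \<bar>gc a\<bar>)" by (intro sum_nonneg) auto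
qed

end



context bio begin

definition M0 :: "nat \<Rightarrow> real \<Rightarrow> nat" where "M0 n R = nat \<lceil>exp (real n * R)\<rceil>"

lemma M0_ge1: "1 \<le> M0 n R"
proof -
  have "0 < exp (real n * R)" by simp
  then have "1 \<le> \<lceil>exp (real n * R)\<rceil>" by (metis ceiling_le_zero linorder_not_le zero_less_one_class.zero_le_one
      int_one_le_iff_zero_less less_le_not_le not_le)
  then show ?thesis unfolding M0_def by linarith
qed

lemma M0_real: "real (M0 n R) = real_of_int \<lceil>exp (real n * R)\<rceil>"
proof -
  have "0 \<le> \<lceil>exp (real n * R)\<rceil>" using exp_gt_zero[of "real n * R"] by linarith
  then show ?thesis unfolding M0_def by simp
qed

lemma M0_lower: "real n * R \<le> ln (real (M0 n R))"
proof -
  have "exp (real n * R) \<le> real (M0 n R)" unfolding M0_real by (rule le_of_int_ceiling)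
  then have "ln (exp (real n * R)) \<le> ln (real (M0 n R))" using M0_ge1[of n R] by (subst ln_le_cancel_iff) auto
  then show ?thesis by simp
qed

lemma M0_upper:
  assumes "0 \<le> R"
  shows "ln (real (M0 n R)) \<le> real n * R + ln 2"
proof -
  have e1: "1 \<le> exp (real n * R)" using assms by simp
  have "real (M0 n R) \<le> exp (real n * R) + 1" unfolding M0_real by (metis of_int_ceiling_le_add_one)
  also have "\<dots> \<le> 2 * exp (real n * R)" using e1 by simp
  finally have "ln (real (M0 n R)) \<le> ln (2 * exp (real n * R))"
    using M0_ge1[of n R] by (subst ln_le_cancel_iff) auto
  also have "\<dots> = ln 2 + real n * R" by (simp add: ln_mult)
  finally show ?thesis by simp
qed

lemma PT_le1: "PT n (exp t) \<le> 1"
  unfolding PT_Pr by (rule Pr_le1[OF qq_pmf])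

lemma pc_le2:
  assumes "1 \<le> M" shows "prob_correct PX WY WZ n M g \<le> 2"
proof -
  have "prob_correct PX WY WZ n M g \<le> exp 0 / real M + PT n (exp 0)" by (rule converse[OF assms])
  also have "\<dots> \<le> 1 + 1"
    using PT_le1[of n 0] assms by (intro add_mono) (auto simp: divide_le_eq)
  finally show ?thesis by simp
qed

lemma pc_star_ge:
  assumes "1 \<le> M" "real n * R \<le> ln (real M)"
  shows "prob_correct PX WY WZ n M g \<le> pc_star PX WY WZ n R"
  unfolding pc_star_def
proof (rule cSup_upper)
  show "prob_correct PX WY WZ n M g \<in> {prob_correct PX WY WZ n M g | M g. 1 \<le> M \<and> ln (real M) \<ge> real n * R}"
    using assms by blast
  show "bdd_above {prob_correct PX WY WZ n M g | M g. 1 \<le> M \<and> ln (real M) \<ge> real n * R}"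
    by (rule bdd_aboveI[of _ 2]) (auto intro: pc_le2)
qed

lemma pc_star_le:
  assumes "\<And>M g. 1 \<le> M \<Longrightarrow> real n * R \<le> ln (real M) \<Longrightarrow> prob_correct PX WY WZ n M g \<le> b"
  shows "pc_star PX WY WZ n R \<le> b"
  unfolding pc_star_def
proof (rule cSup_least)
  show "{prob_correct PX WY WZ n M g | M g. 1 \<le> M \<and> ln (real M) \<ge> real n * R} \<noteq> {}"
    using M0_ge1[of n R] M0_lower[of n R] by blast
  fix x assume "x \<in> {prob_correct PX WY WZ n M g | M g. 1 \<le> M \<and> ln (real M) \<ge> real n * R}"
  then show "x \<le> b" using assms by blast
qed

lemma conv_Pr:
  assumes M: "1 \<le> M" and R: "real n * R \<le> ln (real M)"
  shows "prob_correct PX WY WZ n M g \<le> exp (- D) + Pr qq gc n (\<lambda>x. real n * R - D - real n * Cb < x)"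
proof -
  have "prob_correct PX WY WZ n M g \<le> exp (real n * R - D) / real M + PT n (exp (real n * R - D))"
    by (rule converse[OF M])
  also have "exp (real n * R - D) / real M = exp (real n * R - D - ln (real M))"
    using M by (simp add: exp_diff)
  also have "\<dots> \<le> exp (- D)" using R by simp
  also have "PT n (exp (real n * R - D)) = Pr qq gc n (\<lambda>x. real n * R - D - real n * Cb < x)"
    by (rule PT_Pr)
  finally show ?thesis by simp
qed

lemma ach_Pr:
  "Pr qq gc n (\<lambda>x. ln (real (M0 n R)) + D - real n * Cb < x) - exp (- D) \<le> pc_star PX WY WZ n R"
proof -
  define t where "t = ln (real (M0 n R)) + D"
  have M1: "1 \<le> M0 n R" by (rule M0_ge1)
  have "real (M0 n R) / exp t = exp (- D)"
    using M1 by (simp add: t_def exp_add exp_minus field_simps)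
  then have "Pr qq gc n (\<lambda>x. t - real n * Cb < x) - exp (- D) = PT n (exp t) - real (M0 n R) / exp t"
    by (simp only: PT_Pr)
  also have "\<dots> \<le> prob_correct PX WY WZ n (M0 n R) (dec n (exp t))"
    by (rule achievability[OF M1]) simp
  also have "\<dots> \<le> pc_star PX WY WZ n R"
    by (rule pc_star_ge[OF M1 M0_lower])
  finally show ?thesis by (simp add: t_def)
qed

lemma pc_one: "prob_correct PX WY WZ n 1 (\<lambda>_ _. 0) = 1"
proof -
  have "prob_correct PX WY WZ n 1 (\<lambda>_ _. 0) = (\<Sum>ys\<in>tuples 1 n. (\<Prod>m\<in>{..<1} - {0}. PYn n (ys m)) * (\<Sum>z\<in>seqs n. Qn n (ys 0) z))"
    unfolding pc_formula by (simp add: ind_def sum_distrib_left)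
  also have "\<dots> = (\<Sum>y\<in>seqs n. \<Sum>z\<in>seqs n. Qn n y z)" by (rule sum_B1) simp
  also have "\<dots> = 1" by (rule Qn_sum)
  finally show ?thesis .
qed

end



lemma rate_lim:
  fixes X \<xi> :: "nat \<Rightarrow> real" and L :: real
  assumes L: "L > 0" and nxi: "filterlim (\<lambda>n. real n * (\<xi> n)\<^sup>2) at_top sequentially"
    and up: "\<And>\<epsilon>. \<epsilon> > 0 \<Longrightarrow> eventually (\<lambda>n. X n \<le> 2 * exp (- (real n * (\<xi> n)\<^sup>2) * (L - \<epsilon>))) sequentially"
    and lo: "\<And>\<epsilon>. \<epsilon> > 0 \<Longrightarrow> eventually (\<lambda>n. exp (- (real n * (\<xi> n)\<^sup>2) * (L + \<epsilon>)) / 2 \<le> X n) sequentially"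
  shows "(\<lambda>n. - ln (X n) / (real n * (\<xi> n)\<^sup>2)) \<longlonglongrightarrow> L"
proof (rule order_tendstoI)
  fix a assume a: "a < L"
  define \<epsilon> where "\<epsilon> = (L - a) / 3"
  have e: "\<epsilon> > 0" using a by (simp add: \<epsilon>_def)
  have big: "eventually (\<lambda>n. ln 2 / \<epsilon> + 1 \<le> real n * (\<xi> n)\<^sup>2) sequentially"
    using nxi by (simp add: filterlim_at_top)
  show "eventually (\<lambda>n. a < - ln (X n) / (real n * (\<xi> n)\<^sup>2)) sequentially"
    using up[OF e] lo[OF e] big
  proof eventually_elim
    case (elim n)
    define A where "A = real n * (\<xi> n)\<^sup>2"
    have A1: "ln 2 / \<epsilon> + 1 \<le> A" using elim(3) by (simp add: A_def)
    have lnA: "ln 2 < A * \<epsilon>" using A1 e by (simp add: field_simps)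
    have "0 \<le> ln 2 / \<epsilon>" using e by simp
    then have Apos: "A > 0" using A1 by linarith
    have "0 < exp (- (real n * (\<xi> n)\<^sup>2) * (L + \<epsilon>)) / 2" by simp
    then have Xpos: "X n > 0" using elim(2) by linarith
    have "ln (X n) \<le> ln (2 * exp (- A * (L - \<epsilon>)))"
      using elim(1) Xpos by (subst ln_le_cancel_iff) (auto simp: A_def)
    also have "\<dots> = ln 2 - A * (L - \<epsilon>)" by (simp add: ln_mult)
    finally have l1: "ln (X n) \<le> ln 2 - A * (L - \<epsilon>)" .
    have eqs: "A * (L - \<epsilon>) = a * A + 2 * (A * \<epsilon>)" unfolding \<epsilon>_def by (simp add: field_simps)
    have "0 < A * \<epsilon>" using Apos e by simp
    then have "a * A < - ln (X n)" using l1 eqs lnA by linarith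
    then have "a < (- ln (X n)) / A" using Apos by (simp only: pos_less_divide_eq)
    then show ?case by (simp add: A_def)
  qed
next
  fix a assume a: "a > L"
  define \<epsilon> where "\<epsilon> = (a - L) / 3"
  have e: "\<epsilon> > 0" using a by (simp add: \<epsilon>_def)
  have big: "eventually (\<lambda>n. ln 2 / \<epsilon> + 1 \<le> real n * (\<xi> n)\<^sup>2) sequentially"
    using nxi by (simp add: filterlim_at_top)
  show "eventually (\<lambda>n. - ln (X n) / (real n * (\<xi> n)\<^sup>2) < a) sequentially"
    using lo[OF e] big
  proof eventually_elim
    case (elim n)
    define A where "A = real n * (\<xi> n)\<^sup>2"
    have A1: "ln 2 / \<epsilon> + 1 \<le> A" using elim(2) by (simp add: A_def)
    have lnA: "ln 2 < A * \<epsilon>" using A1 e by (simp add: field_simps)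
    have "0 \<le> ln 2 / \<epsilon>" using e by simp
    then have Apos: "A > 0" using A1 by linarith
    have "0 < exp (- A * (L + \<epsilon>)) / 2" by simp
    moreover have "exp (- A * (L + \<epsilon>)) / 2 \<le> X n" using elim(1) by (simp add: A_def)
    ultimately have "ln (exp (- A * (L + \<epsilon>)) / 2) \<le> ln (X n)"
      using ln_le_cancel_iff by (metis less_le_trans)
    moreover have "ln (exp (- A * (L + \<epsilon>)) / 2) = - A * (L + \<epsilon>) - ln 2" by (simp add: ln_div)
    ultimately have l1: "- A * (L + \<epsilon>) - ln 2 \<le> ln (X n)" by simp
    have eqs: "A * (L + \<epsilon>) = a * A - 2 * (A * \<epsilon>)" unfolding \<epsilon>_def by (simp add: field_simps)
    have "0 < A * \<epsilon>" using Apos e by simp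
    then have "- ln (X n) < a * A" using l1 eqs lnA by linarith
    then have "(- ln (X n)) / A < a" using Apos by (simp only: pos_divide_less_eq)
    then show ?case by (simp add: A_def)
  qed
qed

lemma Pr_flip: "pmf_on q \<Longrightarrow> Pr q g n (\<lambda>x. b < x) = 1 - Pr q (\<lambda>a. - g a) n (\<lambda>x. - b \<le> x)"
proof -
  assume q: "pmf_on q"
  have "Pr q (\<lambda>a. - g a) n (\<lambda>x. - b \<le> x) = Pr q g n (\<lambda>s. \<not> b < s)" by (simp add: Pr_neg not_less)
  then show ?thesis using Pr_compl[OF q, of g n "\<lambda>x. b < x"] by simp
qed




lemma mdset_neg: "mdset q g V B \<Longrightarrow> mdset q (\<lambda>a. - g a) V B"
  unfolding mdset_def by (simp add: sum_negf)

lemma exp_half: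
  fixes A L e :: real
  assumes A: "0 \<le> A" and e: "0 < e" "e \<le> L / 2" and big: "ln 2 \<le> A * L / 2"
  shows "exp (- A * (L + e)) / 2 \<le> exp (- A * (L + e)) - exp (- (A * (2 * L)))"
proof -
  have "A * e \<le> A * (L / 2)" using A e by (intro mult_left_mono) auto
  then have "ln 2 - A * (2 * L) \<le> - A * (L + e)" using big by (simp add: algebra_simps)
  then have "exp (ln 2 - A * (2 * L)) \<le> exp (- A * (L + e))" by simp
  then have "2 * exp (- (A * (2 * L))) \<le> exp (- A * (L + e))" by (simp add: exp_diff exp_minus divide_inverse)
  then show ?thesis by simp
qed

lemma exp_eps_mono:
  fixes A L e e' :: real
  assumes "0 \<le> A" "e' \<le> e"
  shows "exp (- A * (L + e)) / 2 \<le> exp (- A * (L + e')) / 2"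
  using assms by (simp add: mult_left_mono)

context bio begin

theorem main:
  fixes \<xi> :: "nat \<Rightarrow> real"
  assumes Vpos: "Vb > 0" and xi: "\<And>n. \<xi> n > 0" "\<xi> \<longlonglongrightarrow> 0"
    and sq: "filterlim (\<lambda>n. sqrt (real n) * \<xi> n) at_top sequentially"
  shows "((\<lambda>n. - ln (pc_star PX WY WZ n (Cb + \<xi> n)) / (real n * (\<xi> n)\<^sup>2)) \<longlonglongrightarrow> 1 / (2 * Vb)) \<and>
         ((\<lambda>n. - ln (1 - pc_star PX WY WZ n (Cb - \<xi> n)) / (real n * (\<xi> n)\<^sup>2)) \<longlonglongrightarrow> 1 / (2 * Vb))"
proof -
  define B where "B = (\<Sum>a\<in>UNIV. \<bar>gc a\<bar>)"
  interpret P: mdset qq gc Vb B using md_inst[OF Vpos] by (simp add: B_def)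
  interpret N: mdset qq "\<lambda>a. - gc a" Vb B by (rule mdset_neg) (rule P.mdset_axioms)
  define A where "A n = real n * (\<xi> n)\<^sup>2" for n
  have A0: "0 \<le> A n" for n by (simp add: A_def)
  have Lpos: "1 / (2 * Vb) > 0" using Vpos by simp
  have nxi: "filterlim (\<lambda>n. real n * (\<xi> n)\<^sup>2) at_top sequentially"
  proof -
    have "filterlim (\<lambda>n. (sqrt (real n) * \<xi> n) ^ 2) at_top sequentially"
      by (rule filterlim_pow_at_top[OF _ sq]) simp
    moreover have "(sqrt (real n) * \<xi> n) ^ 2 = real n * (\<xi> n)\<^sup>2" for n
      by (simp add: power_mult_distrib)
    ultimately show ?thesis by simp
  qed
  have t0: "(\<lambda>n. ln 2 * \<xi> n / (real n * (\<xi> n)\<^sup>2)) \<longlonglongrightarrow> 0"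
    by (rule tendsto_divide_0[OF tendsto_mult[OF tendsto_const xi(2)] filterlim_at_top_imp_at_infinity[OF nxi]])
  have tV: "(\<lambda>n. \<xi> n / Vb) \<longlonglongrightarrow> 0"
    using tendsto_divide[OF xi(2) tendsto_const[of Vb]] Vpos by simp
  define r1 where "r1 n = ln 2 * \<xi> n / (real n * (\<xi> n)\<^sup>2) + \<xi> n / Vb" for n
  define r2 where "r2 n = - (ln 2 * \<xi> n / (real n * (\<xi> n)\<^sup>2)) - \<xi> n / Vb" for n
  define r3 where "r3 n = - (\<xi> n / Vb)" for n
  define r4 where "r4 n = \<xi> n / Vb" for n
  have r1: "r1 \<longlonglongrightarrow> 0" unfolding r1_def using tendsto_add[OF t0 tV] by simp
  have r2: "r2 \<longlonglongrightarrow> 0" unfolding r2_def using tendsto_diff[OF tendsto_minus[OF t0] tV] by simp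
  have r3: "r3 \<longlonglongrightarrow> 0" unfolding r3_def using tendsto_minus[OF tV] by simp
  have r4: "r4 \<longlonglongrightarrow> 0" unfolding r4_def using tV by simp
  define D where "D n = A n * (2 * (1 / (2 * Vb)))" for n
  have Dalt: "D n = real n * (\<xi> n)\<^sup>2 / Vb" for n using Vpos by (simp add: D_def A_def)
  have id1: "real n * \<xi> n * (1 + r1 n) = real n * \<xi> n + ln 2 + D n" if "n > 0" for n
    using that xi(1)[of n] Vpos unfolding r1_def Dalt by (simp add: field_simps power2_eq_square)
  have id2: "real n * \<xi> n * (1 + r2 n) = real n * \<xi> n - ln 2 - D n" if "n > 0" for n
    using that xi(1)[of n] Vpos unfolding r2_def Dalt by (simp add: field_simps power2_eq_square)
  have id3: "real n * \<xi> n * (1 + r3 n) = real n * \<xi> n - D n" for n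
    using xi(1)[of n] Vpos unfolding r3_def Dalt by (simp add: field_simps power2_eq_square)
  have id4: "real n * \<xi> n * (1 + r4 n) = real n * \<xi> n + D n" for n
    using xi(1)[of n] Vpos unfolding r4_def Dalt by (simp add: field_simps power2_eq_square)
  have big: "eventually (\<lambda>n. ln 2 \<le> A n * (1 / (2 * Vb)) / 2) sequentially"
  proof -
    have "eventually (\<lambda>n. 2 * ln 2 / (1 / (2 * Vb)) \<le> A n) sequentially"
      using nxi by (simp add: filterlim_at_top A_def)
    then show ?thesis by eventually_elim (use Lpos in \<open>simp add: field_simps\<close>)
  qed
  have npos: "eventually (\<lambda>n. n > 0) sequentially" by (rule eventually_gt_at_top)
  have LB2: "eventually (\<lambda>n. exp (- A n * (1 / (2 * Vb) + \<epsilon>)) / 2 \<le> 1 - pc_star PX WY WZ n (Cb - \<xi> n)) sequentially"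
    if e: "\<epsilon> > 0" for \<epsilon>
  proof -
    define e' where "e' = min \<epsilon> (1 / (2 * Vb) / 2)"
    have e': "0 < e'" "e' \<le> \<epsilon>" "e' \<le> 1 / (2 * Vb) / 2" using e Lpos by (auto simp: e'_def)
    show ?thesis using N.md_lower[OF xi r4 e'(1) nxi] big
    proof eventually_elim
      case (elim n)
      have pc: "pc_star PX WY WZ n (Cb - \<xi> n) \<le> exp (- D n) + (1 - exp (- A n * (1 / (2 * Vb) + e')))"
      proof (rule pc_star_le)
        fix M g assume M: "1 \<le> M" "real n * (Cb - \<xi> n) \<le> ln (real M)"
        have "prob_correct PX WY WZ n M g \<le> exp (- D n) + Pr qq gc n (\<lambda>x. real n * (Cb - \<xi> n) - D n - real n * Cb < x)"
          by (rule conv_Pr[OF M])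
        also have "real n * (Cb - \<xi> n) - D n - real n * Cb = - (real n * \<xi> n * (1 + r4 n))"
          using id4[of n] right_diff_distrib[of "real n" Cb "\<xi> n"] by linarith
        also have "Pr qq gc n (\<lambda>x. - (real n * \<xi> n * (1 + r4 n)) < x)
            = 1 - Pr qq (\<lambda>a. - gc a) n (\<lambda>x. real n * \<xi> n * (1 + r4 n) \<le> x)"
          using Pr_flip[OF qq_pmf, of gc n "- (real n * \<xi> n * (1 + r4 n))"] by simp
        finally have c1: "prob_correct PX WY WZ n M g \<le> exp (- D n) + (1 - Pr qq (\<lambda>a. - gc a) n (\<lambda>x. real n * \<xi> n * (1 + r4 n) \<le> x))" .
        have "Pr qq (\<lambda>a. - gc a) n (\<lambda>x. real n * \<xi> n * (1 + r4 n) < x)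
            \<le> Pr qq (\<lambda>a. - gc a) n (\<lambda>x. real n * \<xi> n * (1 + r4 n) \<le> x)"
          by (intro Pr_mono[OF qq_pmf]) auto
        then show "prob_correct PX WY WZ n M g \<le> exp (- D n) + (1 - exp (- A n * (1 / (2 * Vb) + e')))"
          using elim(1) c1 by (simp add: A_def)
      qed
      have "exp (- A n * (1 / (2 * Vb) + \<epsilon>)) / 2 \<le> exp (- A n * (1 / (2 * Vb) + e')) / 2"
        by (rule exp_eps_mono[OF A0 e'(2)])
      also have "\<dots> \<le> exp (- A n * (1 / (2 * Vb) + e')) - exp (- (A n * (2 * (1 / (2 * Vb)))))"
        by (rule exp_half[OF A0 e'(1) e'(3) elim(2)])
      also have "\<dots> \<le> 1 - pc_star PX WY WZ n (Cb - \<xi> n)" using pc by (simp add: D_def)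
      finally show ?case .
    qed
  qed
  have Cge: "eventually (\<lambda>n. 0 \<le> Cb - \<xi> n) sequentially"
    using LB2[of 1, OF zero_less_one]
  proof eventually_elim
    case (elim n)
    show ?case
    proof (rule ccontr)
      assume "\<not> 0 \<le> Cb - \<xi> n"
      then have "real n * (Cb - \<xi> n) \<le> ln (real (1::nat))" by (simp add: mult_nonneg_nonpos)
      then have "prob_correct PX WY WZ n 1 (\<lambda>_ _. 0) \<le> pc_star PX WY WZ n (Cb - \<xi> n)"
        by (intro pc_star_ge) auto
      then have "1 - pc_star PX WY WZ n (Cb - \<xi> n) \<le> 0" using pc_one[of n] by linarith
      moreover have "0 < exp (- A n * (1 / (2 * Vb) + 1)) / 2" by simp
      ultimately show False using elim by linarith
    qed
  qed
  have UB2: "eventually (\<lambda>n. 1 - pc_star PX WY WZ n (Cb - \<xi> n) \<le> 2 * exp (- A n * (1 / (2 * Vb) - \<epsilon>))) sequentially"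
    if e: "\<epsilon> > 0" for \<epsilon>
    using N.md_upper[OF xi r2 e] Cge npos
  proof eventually_elim
    case (elim n)
    have b: "ln (real (M0 n (Cb - \<xi> n))) + D n - real n * Cb \<le> - (real n * \<xi> n * (1 + r2 n))"
      using M0_upper[OF elim(2), of n] id2[OF elim(3)] by (simp add: algebra_simps)
    have "1 - Pr qq (\<lambda>a. - gc a) n (\<lambda>x. real n * \<xi> n * (1 + r2 n) \<le> x) - exp (- D n)
        = Pr qq gc n (\<lambda>x. - (real n * \<xi> n * (1 + r2 n)) < x) - exp (- D n)"
      using Pr_flip[OF qq_pmf, of gc n "- (real n * \<xi> n * (1 + r2 n))"] by simp
    also have "\<dots> \<le> Pr qq gc n (\<lambda>x. ln (real (M0 n (Cb - \<xi> n))) + D n - real n * Cb < x) - exp (- D n)"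
      using b by (intro diff_right_mono Pr_mono[OF qq_pmf]) auto
    also have "\<dots> \<le> pc_star PX WY WZ n (Cb - \<xi> n)" by (rule ach_Pr)
    finally have 1: "1 - pc_star PX WY WZ n (Cb - \<xi> n) \<le> Pr qq (\<lambda>a. - gc a) n (\<lambda>x. real n * \<xi> n * (1 + r2 n) \<le> x) + exp (- D n)"
      by simp
    have "exp (- D n) \<le> exp (- A n * (1 / (2 * Vb) - \<epsilon>))"
    proof -
      have "A n * (1 / (2 * Vb) - \<epsilon>) \<le> A n * (2 * (1 / (2 * Vb)))"
        using A0[of n] e Lpos by (intro mult_left_mono) (auto simp: field_simps)
      then show ?thesis unfolding D_def by simp
    qed
    then show ?case using 1 elim(1) unfolding A_def by linarith
  qed
  have UB1: "eventually (\<lambda>n. pc_star PX WY WZ n (Cb + \<xi> n) \<le> 2 * exp (- A n * (1 / (2 * Vb) - \<epsilon>))) sequentially"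
    if e: "\<epsilon> > 0" for \<epsilon>
    using P.md_upper[OF xi r3 e]
  proof eventually_elim
    case (elim n)
    have eD: "exp (- D n) \<le> exp (- A n * (1 / (2 * Vb) - \<epsilon>))"
    proof -
      have "A n * (1 / (2 * Vb) - \<epsilon>) \<le> A n * (2 * (1 / (2 * Vb)))"
        using A0[of n] e Lpos by (intro mult_left_mono) (auto simp: field_simps)
      then show ?thesis unfolding D_def by simp
    qed
    show ?case
    proof (rule pc_star_le)
      fix M g assume M: "1 \<le> M" "real n * (Cb + \<xi> n) \<le> ln (real M)"
      have "prob_correct PX WY WZ n M g \<le> exp (- D n) + Pr qq gc n (\<lambda>x. real n * (Cb + \<xi> n) - D n - real n * Cb < x)"
        by (rule conv_Pr[OF M])
      also have "real n * (Cb + \<xi> n) - D n - real n * Cb = real n * \<xi> n * (1 + r3 n)"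
        using id3[of n] distrib_left[of "real n" Cb "\<xi> n"] by linarith
      also have "Pr qq gc n (\<lambda>x. real n * \<xi> n * (1 + r3 n) < x) \<le> Pr qq gc n (\<lambda>x. real n * \<xi> n * (1 + r3 n) \<le> x)"
        by (intro Pr_mono[OF qq_pmf]) auto
      finally show "prob_correct PX WY WZ n M g \<le> 2 * exp (- A n * (1 / (2 * Vb) - \<epsilon>))"
        using elim eD unfolding A_def by linarith
    qed
  qed
  have LB1: "eventually (\<lambda>n. exp (- A n * (1 / (2 * Vb) + \<epsilon>)) / 2 \<le> pc_star PX WY WZ n (Cb + \<xi> n)) sequentially"
    if e: "\<epsilon> > 0" for \<epsilon>
  proof -
    define e' where "e' = min \<epsilon> (1 / (2 * Vb) / 2)"
    have e': "0 < e'" "e' \<le> \<epsilon>" "e' \<le> 1 / (2 * Vb) / 2" using e Lpos by (auto simp: e'_def)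
    show ?thesis using P.md_lower[OF xi r1 e'(1) nxi] big Cge npos
    proof eventually_elim
      case (elim n)
      have R0: "0 \<le> Cb + \<xi> n" using elim(3) xi(1)[of n] by simp
      have b: "ln (real (M0 n (Cb + \<xi> n))) + D n - real n * Cb \<le> real n * \<xi> n * (1 + r1 n)"
        using M0_upper[OF R0, of n] id1[OF elim(4)] by (simp add: algebra_simps)
      have "exp (- A n * (1 / (2 * Vb) + \<epsilon>)) / 2 \<le> exp (- A n * (1 / (2 * Vb) + e')) / 2"
        by (rule exp_eps_mono[OF A0 e'(2)])
      also have "\<dots> \<le> exp (- A n * (1 / (2 * Vb) + e')) - exp (- (A n * (2 * (1 / (2 * Vb)))))"
        by (rule exp_half[OF A0 e'(1) e'(3) elim(2)])
      also have "\<dots> \<le> Pr qq gc n (\<lambda>x. real n * \<xi> n * (1 + r1 n) < x) - exp (- D n)"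
        using elim(1) by (simp add: A_def D_def)
      also have "\<dots> \<le> Pr qq gc n (\<lambda>x. ln (real (M0 n (Cb + \<xi> n))) + D n - real n * Cb < x) - exp (- D n)"
        using b by (intro diff_right_mono Pr_mono[OF qq_pmf]) auto
      also have "\<dots> \<le> pc_star PX WY WZ n (Cb + \<xi> n)" by (rule ach_Pr)
      finally show ?case .
    qed
  qed
  have part1: "(\<lambda>n. - ln (pc_star PX WY WZ n (Cb + \<xi> n)) / (real n * (\<xi> n)\<^sup>2)) \<longlonglongrightarrow> 1 / (2 * Vb)"
    by (rule rate_lim[OF Lpos nxi]) (use UB1 LB1 in \<open>simp_all add: A_def\<close>)
  have part2: "(\<lambda>n. - ln (1 - pc_star PX WY WZ n (Cb - \<xi> n)) / (real n * (\<xi> n)\<^sup>2)) \<longlonglongrightarrow> 1 / (2 * Vb)"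
    by (rule rate_lim[OF Lpos nxi]) (use UB2 LB2 in \<open>simp_all add: A_def\<close>)
  show ?thesis using part1 part2 by simp
qed

end



theorem theorem7:
  fixes PX :: "'x::finite \<Rightarrow> real" and WY :: "'x \<Rightarrow> 'y::finite \<Rightarrow> real"
    and WZ :: "'x \<Rightarrow> 'z::finite \<Rightarrow> real" and \<xi> :: "nat \<Rightarrow> real"
  assumes "pmf_on PX" and "stoch_chan WY" and "stoch_chan WZ"
    and "V_bio PX WY WZ > 0"
    and "\<And>n. \<xi> n > 0"
    and "\<xi> \<longlonglongrightarrow> 0"
    and "filterlim (\<lambda>n. sqrt (real n) * \<xi> n) at_top sequentially"
  shows "((\<lambda>n. - ln (pc_star PX WY WZ n (C_bio PX WY WZ + \<xi> n)) / (real n * (\<xi> n)\<^sup>2))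
           \<longlonglongrightarrow> 1 / (2 * V_bio PX WY WZ)) \<and>
         ((\<lambda>n. - ln (1 - pc_star PX WY WZ n (C_bio PX WY WZ - \<xi> n)) / (real n * (\<xi> n)\<^sup>2))
           \<longlonglongrightarrow> 1 / (2 * V_bio PX WY WZ))"
proof -
  interpret bio PX WY WZ using assms(1-3) by unfold_locales
  show ?thesis by (rule main[OF assms(4-7)])
qed



end
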